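(* Let $x_2=F(t,x,x_1)$ be a second-order ODE and suppose that for some smooth $H=H(t,x,x_1)$ the system $(S_H)$ admits a nonlocal symmetry $\mathbf{v}=\xi\partial_t+\eta^0\partial_x+\psi^0\partial_w$ (coefficients functions of $(t,x,x_1,w)$) with associated functionally independent functions $z=z(t,x)$, $\zeta=\zeta(t,x,x_1)$, i.e. $\mathbf v(z)=0$, $\mathbf v^{(1)}(\zeta)|_\Delta=0$ and the equation can be written in terms of $\{z,\zeta,\zeta_z\}$ as a first-order ODE. Then: (i) If $\xi\neq0$, the functions $\eta^0/\xi$ and $\widetilde\lambda=\frac{\xi_t+\xi_xx_1+\xi_{x_1}F+\xi_wH}{\xi}$ do not depend on $w$, and the pair $\widetilde{\mathbf X}=\partial_t+\frac{\eta^0}{\xi}\partial_x$, $\widetilde\lambda$ defines a $\lambda$-symmetry of $x_2=F$. (ii) If $\xi=0$, the function $\widetilde\lambda=\frac{\eta^0_t+\eta^0_xx_1+\eta^0_{x_1}F+\eta^0_wH}{\eta^0}$ does not depend on $w$, and the pair $\widetilde{\mathbf X}=\partial_x$, $\widetilde\lambda$ defines a $\lambda$-symmetry of $x_2=F$. In both cases $\{z,\zeta,\zeta_z\}$ is a complete system of invariants of $\widetilde{\mathbf X}^{[\widetilde\lambda,(1)]}$.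
   Context: Let $F=F(t,x,x_1)$ be smooth, and for a smooth $H=H(t,x,x_1)$ let $(S_H)$ be the system $x_2=F(t,x,x_1)$, $w_1=H(t,x,x_1)$ in the dependent variables $x,w$; $\Delta$ denotes the submanifold of the jet space defined by $(S_H)$. $\widetilde D_t=\partial_t+x_1\partial_x+x_2\partial_{x_1}+w_1\partial_w+\cdots$ is the total derivative in these variables, and $D_t=\partial_t+x_1\partial_x+x_2\partial_{x_1}+\cdots$. For $\mathbf v=\xi\partial_t+\eta^0\partial_x+\psi^0\partial_w$ with coefficients depending on $(t,x,x_1,w)$, its prolongation $\mathbf v^{(k)}$ adds $\sum_{i=1}^k(\eta^i\partial_{x_i}+\psi^i\partial_{w_i})$ with $\eta^i=\widetilde D_t(\eta^{i-1})-\widetilde D_t(\xi)x_i$, $\psi^i=\widetilde D_t(\psi^{i-1})-\widetilde D_t(\xi)w_i$. $\mathbf v$ is a (generalized) symmetry of $(S_H)$ if $\mathbf v^{(2)}(x_2-F)$ and $\mathbf v^{(2)}(w_1-H)$ vanish on $\Delta$. A nonlocal symmetry of $x_2=F$ associated to $(S_H)$ is such a symmetry with $(\xi_w)^2+(\eta^0_w)^2\neq0$ for which there exist functionally independent $z=z(t,x)$, $\zeta=\zeta(t,x,x_1)$ (with $\zeta_{x_1}\ne0$) such that $\mathbf v(z)=0$, $\mathbf v^{(1)}(\zeta)|_\Delta=0$, and $x_2=F$ can be written in terms of $\{z,\zeta,\zeta_z\}$, $\zeta_z=D_t\zeta/D_tz$, as a first-order ODE. For $\lambda=\lambda(t,x,x_1)$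 and $\mathbf X=\rho(t,x)\partial_t+\phi^0(t,x)\partial_x$, $\mathbf{X}^{[\lambda,(k)]}=\rho\partial_t+\phi^0\partial_x+\sum_{i=1}^k\phi^{[\lambda,(i)]}\partial_{x_i}$, $\phi^{[\lambda,(0)]}=\phi^0$, $\phi^{[\lambda,(i)]}=D_t(\phi^{[\lambda,(i-1)]})-D_t(\rho)x_i+\lambda(\phi^{[\lambda,(i-1)]}-\rho x_i)$; $(\mathbf X,\lambda)$ defines a $\lambda$-symmetry of $x_2=F$ if $\mathbf X^{[\lambda,(2)]}$ is tangent to $\{x_2=F\}$. *)

theory Defs
  imports "HOL-Analysis.Analysis"
begin

text \<open>g is C-infinity iff it lies in a family of everywhere (Frechet) differentiable functions
  that is closed under taking directional derivatives.\<close>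
definition smooth :: "('a::real_normed_vector \<Rightarrow> real) \<Rightarrow> bool" where
  "smooth g \<longleftrightarrow> (\<exists>S. g \<in> S \<and> (\<forall>h\<in>S. \<exists>h'. (\<forall>y. (h has_derivative h' y) (at y))
                                          \<and> (\<forall>v. (\<lambda>y. h' y v) \<in> S)))"

definition smooth2 :: "(real \<Rightarrow> real \<Rightarrow> real) \<Rightarrow> bool" where
  "smooth2 f \<longleftrightarrow> smooth (\<lambda>(a,b). f a b)"
definition smooth3 :: "(real \<Rightarrow> real \<Rightarrow> real \<Rightarrow> real) \<Rightarrow> bool" where
  "smooth3 f \<longleftrightarrow> smooth (\<lambda>(a,b,c). f a b c)"
definition smooth4 :: "(real \<Rightarrow> real \<Rightarrow> real \<Rightarrow> real \<Rightarrow> real) \<Rightarrow> bool" where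
  "smooth4 f \<longleftrightarrow> smooth (\<lambda>(a,b,c,d). f a b c d)"

definition pt4 :: "(real \<Rightarrow> real \<Rightarrow> real \<Rightarrow> real \<Rightarrow> real) \<Rightarrow> real \<Rightarrow> real \<Rightarrow> real \<Rightarrow> real \<Rightarrow> real" where
  "pt4 g t x p w = deriv (\<lambda>s. g s x p w) t"
definition px4 :: "(real \<Rightarrow> real \<Rightarrow> real \<Rightarrow> real \<Rightarrow> real) \<Rightarrow> real \<Rightarrow> real \<Rightarrow> real \<Rightarrow> real \<Rightarrow> real" where
  "px4 g t x p w = deriv (\<lambda>s. g t s p w) x"
definition pp4 :: "(real \<Rightarrow> real \<Rightarrow> real \<Rightarrow> real \<Rightarrow> real) \<Rightarrow> real \<Rightarrow> real \<Rightarrow> real \<Rightarrow> real \<Rightarrow> real" where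
  "pp4 g t x p w = deriv (\<lambda>s. g t x s w) p"
definition pw4 :: "(real \<Rightarrow> real \<Rightarrow> real \<Rightarrow> real \<Rightarrow> real) \<Rightarrow> real \<Rightarrow> real \<Rightarrow> real \<Rightarrow> real \<Rightarrow> real" where
  "pw4 g t x p w = deriv (\<lambda>s. g t x p s) w"

definition lam_tilde :: "(real \<Rightarrow> real \<Rightarrow> real \<Rightarrow> real \<Rightarrow> real) \<Rightarrow> (real \<Rightarrow> real \<Rightarrow> real \<Rightarrow> real)
    \<Rightarrow> (real \<Rightarrow> real \<Rightarrow> real \<Rightarrow> real) \<Rightarrow> real \<Rightarrow> real \<Rightarrow> real \<Rightarrow> real \<Rightarrow> real" where
  "lam_tilde c F H t x p w =
     (pt4 c t x p w + px4 c t x p w * p + pp4 c t x p w * F t x p + pw4 c t x p w * H t x p) / c t x p w"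

text \<open>A jet point is (t, X, W) with X i = x_i and W i = w_i (X 0 = x, W 0 = w).\<close>
type_synonym wjet_fun = "real \<Rightarrow> (nat \<Rightarrow> real) \<Rightarrow> (nat \<Rightarrow> real) \<Rightarrow> real"

definition wpd_t :: "wjet_fun \<Rightarrow> wjet_fun" where
  "wpd_t f t X W = deriv (\<lambda>s. f s X W) t"
definition wpd_x :: "nat \<Rightarrow> wjet_fun \<Rightarrow> wjet_fun" where
  "wpd_x i f t X W = deriv (\<lambda>s. f t (X(i := s)) W) (X i)"
definition wpd_w :: "nat \<Rightarrow> wjet_fun \<Rightarrow> wjet_fun" where
  "wpd_w i f t X W = deriv (\<lambda>s. f t X (W(i := s))) (W i)"

text \<open>Total derivative tilde-D_t = d_t + x1 d_x + x2 d_x1 + ... + w1 d_w + w2 d_w1 + ...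
  (the series has only finitely many nonzero terms for functions of finitely many coordinates).\<close>
definition totDw :: "wjet_fun \<Rightarrow> wjet_fun" where
  "totDw f t X W = wpd_t f t X W
     + (\<Sum>i. X (Suc i) * wpd_x i f t X W + W (Suc i) * wpd_w i f t X W)"

definition lift4 :: "(real \<Rightarrow> real \<Rightarrow> real \<Rightarrow> real \<Rightarrow> real) \<Rightarrow> wjet_fun" where
  "lift4 g t X W = g t (X 0) (X 1) (W 0)"
definition lift3w :: "(real \<Rightarrow> real \<Rightarrow> real \<Rightarrow> real) \<Rightarrow> wjet_fun" where
  "lift3w g t X W = g t (X 0) (X 1)"
definition lift2w :: "(real \<Rightarrow> real \<Rightarrow> real) \<Rightarrow> wjet_fun" where
  "lift2w g t X W = g t (X 0)"

fun eta_prol :: "wjet_fun \<Rightarrow> wjet_fun \<Rightarrow> nat \<Rightarrow> wjet_fun" where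
  "eta_prol xi eta 0 = eta"
| "eta_prol xi eta (Suc i) =
     (\<lambda>t X W. totDw (eta_prol xi eta i) t X W - totDw xi t X W * X (Suc i))"

fun psi_prol :: "wjet_fun \<Rightarrow> wjet_fun \<Rightarrow> nat \<Rightarrow> wjet_fun" where
  "psi_prol xi psi 0 = psi"
| "psi_prol xi psi (Suc i) =
     (\<lambda>t X W. totDw (psi_prol xi psi i) t X W - totDw xi t X W * W (Suc i))"

definition prol_apply :: "(real \<Rightarrow> real \<Rightarrow> real \<Rightarrow> real \<Rightarrow> real) \<Rightarrow> (real \<Rightarrow> real \<Rightarrow> real \<Rightarrow> real \<Rightarrow> real)
    \<Rightarrow> (real \<Rightarrow> real \<Rightarrow> real \<Rightarrow> real \<Rightarrow> real) \<Rightarrow> nat \<Rightarrow> wjet_fun \<Rightarrow> wjet_fun" where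
  "prol_apply xi eta psi k f t X W =
     lift4 xi t X W * wpd_t f t X W
     + (\<Sum>i\<le>k. eta_prol (lift4 xi) (lift4 eta) i t X W * wpd_x i f t X W
              + psi_prol (lift4 xi) (lift4 psi) i t X W * wpd_w i f t X W)"

text \<open>Delta: the (infinitely prolonged) submanifold defined by x2 = F, w1 = H.\<close>
definition Delta :: "(real \<Rightarrow> real \<Rightarrow> real \<Rightarrow> real) \<Rightarrow> (real \<Rightarrow> real \<Rightarrow> real \<Rightarrow> real)
    \<Rightarrow> (real \<times> (nat \<Rightarrow> real) \<times> (nat \<Rightarrow> real)) set" where
  "Delta F H = {(t, X, W). \<forall>k. X (k + 2) = (totDw ^^ k) (lift3w F) t X W
                              \<and> W (Suc k) = (totDw ^^ k) (lift3w H) t X W}"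

definition gen_symmetry :: "(real \<Rightarrow> real \<Rightarrow> real \<Rightarrow> real) \<Rightarrow> (real \<Rightarrow> real \<Rightarrow> real \<Rightarrow> real)
    \<Rightarrow> (real \<Rightarrow> real \<Rightarrow> real \<Rightarrow> real \<Rightarrow> real) \<Rightarrow> (real \<Rightarrow> real \<Rightarrow> real \<Rightarrow> real \<Rightarrow> real)
    \<Rightarrow> (real \<Rightarrow> real \<Rightarrow> real \<Rightarrow> real \<Rightarrow> real) \<Rightarrow> bool" where
  "gen_symmetry F H xi eta psi \<longleftrightarrow>
     (\<forall>(t, X, W) \<in> Delta F H.
        prol_apply xi eta psi 2 (\<lambda>t X W. X 2 - F t (X 0) (X 1)) t X W = 0
      \<and> prol_apply xi eta psi 2 (\<lambda>t X W. W 1 - H t (X 0) (X 1)) t X W = 0)"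

type_synonym jet_fun = "real \<Rightarrow> (nat \<Rightarrow> real) \<Rightarrow> real"

definition pd_t :: "jet_fun \<Rightarrow> jet_fun" where
  "pd_t f t X = deriv (\<lambda>s. f s X) t"
definition pd_x :: "nat \<Rightarrow> jet_fun \<Rightarrow> jet_fun" where
  "pd_x i f t X = deriv (\<lambda>s. f t (X(i := s))) (X i)"

definition totD :: "jet_fun \<Rightarrow> jet_fun" where
  "totD f t X = pd_t f t X + (\<Sum>i. X (Suc i) * pd_x i f t X)"

definition lift2 :: "(real \<Rightarrow> real \<Rightarrow> real) \<Rightarrow> jet_fun" where
  "lift2 g t X = g t (X 0)"
definition lift3 :: "(real \<Rightarrow> real \<Rightarrow> real \<Rightarrow> real) \<Rightarrow> jet_fun" where
  "lift3 g t X = g t (X 0) (X 1)"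

definition zeta_z :: "(real \<Rightarrow> real \<Rightarrow> real) \<Rightarrow> (real \<Rightarrow> real \<Rightarrow> real \<Rightarrow> real) \<Rightarrow> jet_fun" where
  "zeta_z z zeta t X = totD (lift3 zeta) t X / totD (lift2 z) t X"

definition func_indep :: "(real \<Rightarrow> real \<Rightarrow> real) \<Rightarrow> (real \<Rightarrow> real \<Rightarrow> real \<Rightarrow> real) \<Rightarrow> bool" where
  "func_indep z zeta \<longleftrightarrow> (\<forall>t X a b.
      a * pd_t (lift2 z) t X + b * pd_t (lift3 zeta) t X = 0
    \<and> a * pd_x 0 (lift2 z) t X + b * pd_x 0 (lift3 zeta) t X = 0
    \<and> a * pd_x 1 (lift2 z) t X + b * pd_x 1 (lift3 zeta) t X = 0 \<longrightarrow> a = 0 \<and> b = 0)"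

definition reducible :: "(real \<Rightarrow> real \<Rightarrow> real \<Rightarrow> real) \<Rightarrow> (real \<Rightarrow> real \<Rightarrow> real)
    \<Rightarrow> (real \<Rightarrow> real \<Rightarrow> real \<Rightarrow> real) \<Rightarrow> bool" where
  "reducible F z zeta \<longleftrightarrow> (\<exists>G :: real \<Rightarrow> real \<Rightarrow> real. \<forall>t X. totD (lift2 z) t X \<noteq> 0 \<longrightarrow>
      (X 2 = F t (X 0) (X 1) \<longleftrightarrow> zeta_z z zeta t X = G (z t (X 0)) (zeta t (X 0) (X 1))))"

definition nonlocal_symmetry :: "(real \<Rightarrow> real \<Rightarrow> real \<Rightarrow> real) \<Rightarrow> (real \<Rightarrow> real \<Rightarrow> real \<Rightarrow> real)
    \<Rightarrow> (real \<Rightarrow> real \<Rightarrow> real \<Rightarrow> real \<Rightarrow> real) \<Rightarrow> (real \<Rightarrow> real \<Rightarrow> real \<Rightarrow> real \<Rightarrow> real)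
    \<Rightarrow> (real \<Rightarrow> real \<Rightarrow> real \<Rightarrow> real \<Rightarrow> real) \<Rightarrow> (real \<Rightarrow> real \<Rightarrow> real)
    \<Rightarrow> (real \<Rightarrow> real \<Rightarrow> real \<Rightarrow> real) \<Rightarrow> bool" where
  "nonlocal_symmetry F H xi eta psi z zeta \<longleftrightarrow>
     smooth4 xi \<and> smooth4 eta \<and> smooth4 psi \<and> smooth2 z \<and> smooth3 zeta
   \<and> gen_symmetry F H xi eta psi
   \<and> (\<exists>t x p w. (pw4 xi t x p w)\<^sup>2 + (pw4 eta t x p w)\<^sup>2 \<noteq> 0)
   \<and> func_indep z zeta
   \<and> (\<forall>t X. pd_x 1 (lift3 zeta) t X \<noteq> 0)
   \<and> (\<forall>t X W. prol_apply xi eta psi 0 (lift2w z) t X W = 0)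
   \<and> (\<forall>(t, X, W) \<in> Delta F H. prol_apply xi eta psi 1 (lift3w zeta) t X W = 0)
   \<and> reducible F z zeta"

fun phi_lam :: "(real \<Rightarrow> real \<Rightarrow> real) \<Rightarrow> (real \<Rightarrow> real \<Rightarrow> real) \<Rightarrow> (real \<Rightarrow> real \<Rightarrow> real \<Rightarrow> real)
    \<Rightarrow> nat \<Rightarrow> jet_fun" where
  "phi_lam rho phi lam 0 = lift2 phi"
| "phi_lam rho phi lam (Suc i) =
     (\<lambda>t X. totD (phi_lam rho phi lam i) t X - totD (lift2 rho) t X * X (Suc i)
            + lift3 lam t X * (phi_lam rho phi lam i t X - rho t (X 0) * X (Suc i)))"

definition lam_prol_apply :: "(real \<Rightarrow> real \<Rightarrow> real) \<Rightarrow> (real \<Rightarrow> real \<Rightarrow> real)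
    \<Rightarrow> (real \<Rightarrow> real \<Rightarrow> real \<Rightarrow> real) \<Rightarrow> nat \<Rightarrow> jet_fun \<Rightarrow> jet_fun" where
  "lam_prol_apply rho phi lam k f t X =
     rho t (X 0) * pd_t f t X + (\<Sum>i\<le>k. phi_lam rho phi lam i t X * pd_x i f t X)"

definition lambda_symmetry :: "(real \<Rightarrow> real \<Rightarrow> real \<Rightarrow> real) \<Rightarrow> (real \<Rightarrow> real \<Rightarrow> real)
    \<Rightarrow> (real \<Rightarrow> real \<Rightarrow> real) \<Rightarrow> (real \<Rightarrow> real \<Rightarrow> real \<Rightarrow> real) \<Rightarrow> bool" where
  "lambda_symmetry F rho phi lam \<longleftrightarrow>
     (\<forall>t X. X 2 = F t (X 0) (X 1) \<longrightarrow>
        lam_prol_apply rho phi lam 2 (\<lambda>t X. X 2 - F t (X 0) (X 1)) t X = 0)"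

text \<open>Is is a complete system of invariants of X^[lam,(2)] on the region V of the 2-jet space
  (coordinates t, x, x1, x2): three functionally independent invariants of a nowhere vanishing
  vector field on a 4-dimensional space.\<close>
definition complete_invariants2 :: "(real \<Rightarrow> real \<Rightarrow> real) \<Rightarrow> (real \<Rightarrow> real \<Rightarrow> real)
    \<Rightarrow> (real \<Rightarrow> real \<Rightarrow> real \<Rightarrow> real) \<Rightarrow> jet_fun list \<Rightarrow> (real \<times> (nat \<Rightarrow> real)) set \<Rightarrow> bool" where
  "complete_invariants2 rho phi lam Is V \<longleftrightarrow>
     length Is = 3
   \<and> (\<forall>(t, X) \<in> V. rho t (X 0) \<noteq> 0 \<or> (\<exists>i\<le>2. phi_lam rho phi lam i t X \<noteq> 0))
   \<and> (\<forall>(t, X) \<in> V. \<forall>I \<in> set Is. lam_prol_apply rho phi lam 2 I t X = 0)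
   \<and> (\<forall>(t, X) \<in> V. \<forall>c :: nat \<Rightarrow> real.
        (\<Sum>k<3. c k * pd_t (Is ! k) t X) = 0
      \<and> (\<forall>j\<le>2. (\<Sum>k<3. c k * pd_x j (Is ! k) t X) = 0) \<longrightarrow> (\<forall>k<3. c k = 0))"

end

theory Submission
  imports Defs
begin


lemma smooth_D:
  assumes "smooth g"
  shows "\<exists>g'. (\<forall>y. (g has_derivative g' y) (at y)) \<and> (\<forall>v. smooth (\<lambda>y. g' y v))"
proof -
  obtain S where S: "g \<in> S" "\<forall>h\<in>S. \<exists>h'. (\<forall>y. (h has_derivative h' y) (at y)) \<and> (\<forall>v. (\<lambda>y. h' y v) \<in> S)"
    using assms unfolding smooth_def by blast
  then obtain g' where g': "\<forall>y. (g has_derivative g' y) (at y)" "\<forall>v. (\<lambda>y. g' y v) \<in> S" by blast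
  have "\<forall>v. smooth (\<lambda>y. g' y v)" using g'(2) S(2) unfolding smooth_def by blast
  with g' show ?thesis by blast
qed

lemma line_deriv:
  fixes G :: "'a::real_normed_vector \<Rightarrow> real"
  assumes "(G has_derivative G') (at (c + t *\<^sub>R e))"
  shows "((\<lambda>s. G (c + s *\<^sub>R e)) has_real_derivative G' e) (at t)"
proof -
  have l: "((\<lambda>s. c + s *\<^sub>R e) has_derivative (\<lambda>h. h *\<^sub>R e)) (at t)"
    by (auto intro!: derivative_eq_intros)
  have "((\<lambda>s. G (c + s *\<^sub>R e)) has_derivative (\<lambda>h. G' (h *\<^sub>R e))) (at t)"
    using has_derivative_compose[OF l assms] by (simp add: o_def)
  moreover have "bounded_linear G'" using assms has_derivative_bounded_linear by blast
  ultimately have "((\<lambda>s. G (c + s *\<^sub>R e)) has_derivative (\<lambda>h. h * G' e)) (at t)"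
    by (simp add: linear_simps(5))
  moreover have "(\<lambda>h. h * G' e) = (*) (G' e)" by (auto simp: mult.commute)
  ultimately show ?thesis unfolding has_field_derivative_def by simp
qed

lemma smooth_cont: assumes "smooth g" shows "continuous_on UNIV g"
proof -
  obtain g' where "\<forall>y. (g has_derivative g' y) (at y)" using smooth_D[OF assms] by blast
  thus ?thesis by (meson continuous_at_imp_continuous_on has_derivative_continuous)
qed

definition pdiff4 :: "(real \<Rightarrow> real \<Rightarrow> real \<Rightarrow> real \<Rightarrow> real) \<Rightarrow> bool" where
  "pdiff4 g \<longleftrightarrow> (\<forall>t x p w. ((\<lambda>s. g s x p w) has_real_derivative pt4 g t x p w) (at t)
     \<and> ((\<lambda>s. g t s p w) has_real_derivative px4 g t x p w) (at x)
     \<and> ((\<lambda>s. g t x s w) has_real_derivative pp4 g t x p w) (at p)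
     \<and> ((\<lambda>s. g t x p s) has_real_derivative pw4 g t x p w) (at w))"

lemma smooth4_parts:
  assumes "smooth4 g"
  shows "pdiff4 g" "smooth4 (pt4 g)" "smooth4 (px4 g)" "smooth4 (pp4 g)" "smooth4 (pw4 g)"
proof -
  let ?G = "\<lambda>(a::real,b::real,c::real,d::real). g a b c d"
  obtain G' where G': "\<forall>y. (?G has_derivative G' y) (at y)" "\<forall>v. smooth (\<lambda>y. G' y v)"
    using smooth_D assms unfolding smooth4_def by blast
  have d1: "((\<lambda>s. g s x p w) has_real_derivative G' (t,x,p,w) (1,0,0,0)) (at t)" for t x p w
    using line_deriv[of ?G "G' (t,x,p,w)" "(0,x,p,w)" t "(1,0,0,0)"] G'(1) by simp
  have d2: "((\<lambda>s. g t s p w) has_real_derivative G' (t,x,p,w) (0,1,0,0)) (at x)" for t x p w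
    using line_deriv[of ?G "G' (t,x,p,w)" "(t,0,p,w)" x "(0,1,0,0)"] G'(1) by simp
  have d3: "((\<lambda>s. g t x s w) has_real_derivative G' (t,x,p,w) (0,0,1,0)) (at p)" for t x p w
    using line_deriv[of ?G "G' (t,x,p,w)" "(t,x,0,w)" p "(0,0,1,0)"] G'(1) by simp
  have d4: "((\<lambda>s. g t x p s) has_real_derivative G' (t,x,p,w) (0,0,0,1)) (at w)" for t x p w
    using line_deriv[of ?G "G' (t,x,p,w)" "(t,x,p,0)" w "(0,0,0,1)"] G'(1) by simp
  have e1: "pt4 g = (\<lambda>t x p w. G' (t,x,p,w) (1,0,0,0))"
    using d1 DERIV_imp_deriv unfolding pt4_def by (intro ext) blast
  have e2: "px4 g = (\<lambda>t x p w. G' (t,x,p,w) (0,1,0,0))"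
    using d2 DERIV_imp_deriv unfolding px4_def by (intro ext) blast
  have e3: "pp4 g = (\<lambda>t x p w. G' (t,x,p,w) (0,0,1,0))"
    using d3 DERIV_imp_deriv unfolding pp4_def by (intro ext) blast
  have e4: "pw4 g = (\<lambda>t x p w. G' (t,x,p,w) (0,0,0,1))"
    using d4 DERIV_imp_deriv unfolding pw4_def by (intro ext) blast
  show "pdiff4 g" unfolding pdiff4_def e1 e2 e3 e4 using d1 d2 d3 d4 by blast
  have cp: "(\<lambda>(a::real,b::real,c::real,d::real). G' (a,b,c,d) v) = (\<lambda>y. G' y v)" for v by auto
  show "smooth4 (pt4 g)" unfolding smooth4_def e1 by (simp add: cp G'(2))
  show "smooth4 (px4 g)" unfolding smooth4_def e2 by (simp add: cp G'(2))
  show "smooth4 (pp4 g)" unfolding smooth4_def e3 by (simp add: cp G'(2))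
  show "smooth4 (pw4 g)" unfolding smooth4_def e4 by (simp add: cp G'(2))
qed




lemma cont2_box:
  fixes f :: "real \<Rightarrow> real \<Rightarrow> real"
  assumes "continuous_on UNIV (\<lambda>(x,y). f x y)" "e > 0"
  shows "\<exists>d>0. \<forall>x y. \<bar>x - a\<bar> < d \<longrightarrow> \<bar>y - b\<bar> < d \<longrightarrow> \<bar>f x y - f a b\<bar> < e"
proof -
  obtain \<delta> where d: "\<delta> > 0" "\<forall>z. dist z (a,b) < \<delta> \<longrightarrow> dist ((\<lambda>(x,y). f x y) z) ((\<lambda>(x,y). f x y) (a,b)) < e"
    using assms unfolding continuous_on_iff by (meson UNIV_I)
  show ?thesis
  proof (intro exI[of _ "\<delta>/2"] conjI allI impI)
    show "\<delta>/2 > 0" using d by simp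
    fix x y assume h: "\<bar>x - a\<bar> < \<delta>/2" "\<bar>y - b\<bar> < \<delta>/2"
    have "dist (x,y) (a,b) = sqrt ((dist x a)\<^sup>2 + (dist y b)\<^sup>2)" by (simp add: dist_Pair_Pair)
    also have "\<dots> \<le> \<bar>dist x a\<bar> + \<bar>dist y b\<bar>" by (rule sqrt_sum_squares_le_sum_abs)
    also have "\<dots> < \<delta>" using h by (simp add: dist_real_def)
    finally have "dist (x,y) (a,b) < \<delta>" .
    with d(2) have "dist (f x y) (f a b) < e" by fastforce
    thus "\<bar>f x y - f a b\<bar> < e" by (simp add: dist_real_def)
  qed
qed

lemma clairaut:
  fixes G G1 G2 G12 G21 :: "real \<Rightarrow> real \<Rightarrow> real"
  assumes d1: "\<And>a b. ((\<lambda>s. G s b) has_real_derivative G1 a b) (at a)"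
    and d2: "\<And>a b. ((\<lambda>s. G a s) has_real_derivative G2 a b) (at b)"
    and d12: "\<And>a b. ((\<lambda>s. G1 a s) has_real_derivative G12 a b) (at b)"
    and d21: "\<And>a b. ((\<lambda>s. G2 s b) has_real_derivative G21 a b) (at a)"
    and c12: "continuous_on UNIV (\<lambda>(a,b). G12 a b)"
    and c21: "continuous_on UNIV (\<lambda>(a,b). G21 a b)"
  shows "G12 a b = G21 a b"
proof (rule ccontr)
  assume ne: "G12 a b \<noteq> G21 a b"
  define e where "e = \<bar>G12 a b - G21 a b\<bar> / 2"
  have e: "e > 0" using ne by (simp add: e_def)
  obtain \<delta>1 where dl1: "\<delta>1 > 0" "\<forall>x y. \<bar>x - a\<bar> < \<delta>1 \<longrightarrow> \<bar>y - b\<bar> < \<delta>1 \<longrightarrow> \<bar>G12 x y - G12 a b\<bar> < e"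
    using cont2_box[OF c12 e] by blast
  obtain \<delta>2 where dl2: "\<delta>2 > 0" "\<forall>x y. \<bar>x - a\<bar> < \<delta>2 \<longrightarrow> \<bar>y - b\<bar> < \<delta>2 \<longrightarrow> \<bar>G21 x y - G21 a b\<bar> < e"
    using cont2_box[OF c21 e] by blast
  define h where "h = min \<delta>1 \<delta>2 / 2"
  have h: "h > 0" "h < \<delta>1" "h < \<delta>2" using dl1 dl2 by (auto simp: h_def)
  define D where "D = G (a+h) (b+h) - G (a+h) b - G a (b+h) + G a b"
  obtain c1 where c1: "a < c1" "c1 < a + h"
    "(G (a+h) (b+h) - G (a+h) b) - (G a (b+h) - G a b) = (a + h - a) * (G1 c1 (b+h) - G1 c1 b)"
    using MVT2[of a "a+h" "\<lambda>s. G s (b+h) - G s b" "\<lambda>s. G1 s (b+h) - G1 s b", OF _ DERIV_diff[OF d1 d1]] h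
      by auto
  obtain c2 where c2: "b < c2" "c2 < b + h" "G1 c1 (b+h) - G1 c1 b = (b + h - b) * G12 c1 c2"
    using MVT2[of b "b+h" "\<lambda>s. G1 c1 s" "\<lambda>s. G12 c1 s"] h d12 by auto
  obtain e2 where e2: "b < e2" "e2 < b + h"
    "(G (a+h) (b+h) - G a (b+h)) - (G (a+h) b - G a b) = (b + h - b) * (G2 (a+h) e2 - G2 a e2)"
    using MVT2[of b "b+h" "\<lambda>s. G (a+h) s - G a s" "\<lambda>s. G2 (a+h) s - G2 a s", OF _ DERIV_diff[OF d2 d2]] h
      by auto
  obtain e1 where e1: "a < e1" "e1 < a + h" "G2 (a+h) e2 - G2 a e2 = (a + h - a) * G21 e1 e2"
    using MVT2[of a "a+h" "\<lambda>s. G2 s e2" "\<lambda>s. G21 s e2"] h d21 by auto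
  have "h * (h * G12 c1 c2) = h * (h * G21 e1 e2)"
    using c1(3) c2(3) e2(3) e1(3) by (simp add: algebra_simps)
  hence eq: "G12 c1 c2 = G21 e1 e2" using h by simp
  have "\<bar>G12 c1 c2 - G12 a b\<bar> < e" using dl1(2) c1 c2 h by auto
  moreover have "\<bar>G21 e1 e2 - G21 a b\<bar> < e" using dl2(2) e1 e2 h by auto
  ultimately have "\<bar>G12 a b - G21 a b\<bar> < 2 * e" using eq by linarith
  thus False by (simp add: e_def)
qed




definition pt3 :: "(real \<Rightarrow> real \<Rightarrow> real \<Rightarrow> real) \<Rightarrow> real \<Rightarrow> real \<Rightarrow> real \<Rightarrow> real" where
  "pt3 g t x p = deriv (\<lambda>s. g s x p) t"
definition px3 :: "(real \<Rightarrow> real \<Rightarrow> real \<Rightarrow> real) \<Rightarrow> real \<Rightarrow> real \<Rightarrow> real \<Rightarrow> real" where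
  "px3 g t x p = deriv (\<lambda>s. g t s p) x"
definition pp3 :: "(real \<Rightarrow> real \<Rightarrow> real \<Rightarrow> real) \<Rightarrow> real \<Rightarrow> real \<Rightarrow> real \<Rightarrow> real" where
  "pp3 g t x p = deriv (\<lambda>s. g t x s) p"
definition pt2 :: "(real \<Rightarrow> real \<Rightarrow> real) \<Rightarrow> real \<Rightarrow> real \<Rightarrow> real" where
  "pt2 g t x = deriv (\<lambda>s. g s x) t"
definition px2 :: "(real \<Rightarrow> real \<Rightarrow> real) \<Rightarrow> real \<Rightarrow> real \<Rightarrow> real" where
  "px2 g t x = deriv (\<lambda>s. g t s) x"

definition pdiff3 :: "(real \<Rightarrow> real \<Rightarrow> real \<Rightarrow> real) \<Rightarrow> bool" where
  "pdiff3 g \<longleftrightarrow> (\<forall>t x p. ((\<lambda>s. g s x p) has_real_derivative pt3 g t x p) (at t)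
     \<and> ((\<lambda>s. g t s p) has_real_derivative px3 g t x p) (at x)
     \<and> ((\<lambda>s. g t x s) has_real_derivative pp3 g t x p) (at p))"
definition pdiff2 :: "(real \<Rightarrow> real \<Rightarrow> real) \<Rightarrow> bool" where
  "pdiff2 g \<longleftrightarrow> (\<forall>t x. ((\<lambda>s. g s x) has_real_derivative pt2 g t x) (at t)
     \<and> ((\<lambda>s. g t s) has_real_derivative px2 g t x) (at x))"

lemma smooth3_parts:
  assumes "smooth3 g"
  shows "pdiff3 g" "smooth3 (pt3 g)" "smooth3 (px3 g)" "smooth3 (pp3 g)"
    "continuous_on UNIV (\<lambda>(a,b,c). g a b c)"
proof -
  let ?G = "\<lambda>(a::real,b::real,c::real). g a b c"
  show "continuous_on UNIV (\<lambda>(a,b,c). g a b c)" using smooth_cont assms unfolding smooth3_def by blast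
  obtain G' where G': "\<forall>y. (?G has_derivative G' y) (at y)" "\<forall>v. smooth (\<lambda>y. G' y v)"
    using smooth_D assms unfolding smooth3_def by blast
  have d1: "((\<lambda>s. g s x p) has_real_derivative G' (t,x,p) (1,0,0)) (at t)" for t x p
    using line_deriv[of ?G "G' (t,x,p)" "(0,x,p)" t "(1,0,0)"] G'(1) by simp
  have d2: "((\<lambda>s. g t s p) has_real_derivative G' (t,x,p) (0,1,0)) (at x)" for t x p
    using line_deriv[of ?G "G' (t,x,p)" "(t,0,p)" x "(0,1,0)"] G'(1) by simp
  have d3: "((\<lambda>s. g t x s) has_real_derivative G' (t,x,p) (0,0,1)) (at p)" for t x p
    using line_deriv[of ?G "G' (t,x,p)" "(t,x,0)" p "(0,0,1)"] G'(1) by simp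
  have e1: "pt3 g = (\<lambda>t x p. G' (t,x,p) (1,0,0))"
    using d1 DERIV_imp_deriv unfolding pt3_def by (intro ext) blast
  have e2: "px3 g = (\<lambda>t x p. G' (t,x,p) (0,1,0))"
    using d2 DERIV_imp_deriv unfolding px3_def by (intro ext) blast
  have e3: "pp3 g = (\<lambda>t x p. G' (t,x,p) (0,0,1))"
    using d3 DERIV_imp_deriv unfolding pp3_def by (intro ext) blast
  show "pdiff3 g" unfolding pdiff3_def e1 e2 e3 using d1 d2 d3 by blast
  have cp: "(\<lambda>(a::real,b::real,c::real). G' (a,b,c) v) = (\<lambda>y. G' y v)" for v by auto
  show "smooth3 (pt3 g)" unfolding smooth3_def e1 by (simp add: cp G'(2))
  show "smooth3 (px3 g)" unfolding smooth3_def e2 by (simp add: cp G'(2))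
  show "smooth3 (pp3 g)" unfolding smooth3_def e3 by (simp add: cp G'(2))
qed

lemma smooth2_parts:
  assumes "smooth2 g"
  shows "pdiff2 g" "smooth2 (pt2 g)" "smooth2 (px2 g)"
    "continuous_on UNIV (\<lambda>(a,b). g a b)"
proof -
  let ?G = "\<lambda>(a::real,b::real). g a b"
  show "continuous_on UNIV (\<lambda>(a,b). g a b)" using smooth_cont assms unfolding smooth2_def by blast
  obtain G' where G': "\<forall>y. (?G has_derivative G' y) (at y)" "\<forall>v. smooth (\<lambda>y. G' y v)"
    using smooth_D assms unfolding smooth2_def by blast
  have d1: "((\<lambda>s. g s x) has_real_derivative G' (t,x) (1,0)) (at t)" for t x
    using line_deriv[of ?G "G' (t,x)" "(0,x)" t "(1,0)"] G'(1) by simp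
  have d2: "((\<lambda>s. g t s) has_real_derivative G' (t,x) (0,1)) (at x)" for t x
    using line_deriv[of ?G "G' (t,x)" "(t,0)" x "(0,1)"] G'(1) by simp
  have e1: "pt2 g = (\<lambda>t x. G' (t,x) (1,0))"
    using d1 DERIV_imp_deriv unfolding pt2_def by (intro ext) blast
  have e2: "px2 g = (\<lambda>t x. G' (t,x) (0,1))"
    using d2 DERIV_imp_deriv unfolding px2_def by (intro ext) blast
  show "pdiff2 g" unfolding pdiff2_def e1 e2 using d1 d2 by blast
  have cp: "(\<lambda>(a::real,b::real). G' (a,b) v) = (\<lambda>y. G' y v)" for v by auto
  show "smooth2 (pt2 g)" unfolding smooth2_def e1 by (simp add: cp G'(2))
  show "smooth2 (px2 g)" unfolding smooth2_def e2 by (simp add: cp G'(2))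
qed

lemma cont3_pairs:
  fixes g :: "real \<Rightarrow> real \<Rightarrow> real \<Rightarrow> real"
  assumes "continuous_on UNIV (\<lambda>(a,b,c). g a b c)"
  shows "continuous_on UNIV (\<lambda>(a,b). g a b c0)" "continuous_on UNIV (\<lambda>(a,b). g a b0 b)"
    "continuous_on UNIV (\<lambda>(a,b). g a0 a b)"
proof -
  have c: "continuous_on UNIV (\<lambda>z::real\<times>real\<times>real. g (fst z) (fst (snd z)) (snd (snd z)))"
    using assms by (simp add: case_prod_beta')
  have "continuous_on UNIV ((\<lambda>z::real\<times>real\<times>real. g (fst z) (fst (snd z)) (snd (snd z))) \<circ> (\<lambda>z. (fst z, snd z, c0)))"
    by (intro continuous_on_compose continuous_intros continuous_on_subset[OF c]) auto
  thus "continuous_on UNIV (\<lambda>(a,b). g a b c0)" by (simp add: o_def case_prod_beta')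
  have "continuous_on UNIV ((\<lambda>z::real\<times>real\<times>real. g (fst z) (fst (snd z)) (snd (snd z))) \<circ> (\<lambda>z. (fst z, b0, snd z)))"
    by (intro continuous_on_compose continuous_intros continuous_on_subset[OF c]) auto
  thus "continuous_on UNIV (\<lambda>(a,b). g a b0 b)" by (simp add: o_def case_prod_beta')
  have "continuous_on UNIV ((\<lambda>z::real\<times>real\<times>real. g (fst z) (fst (snd z)) (snd (snd z))) \<circ> (\<lambda>z. (a0, fst z, snd z)))"
    by (intro continuous_on_compose continuous_intros continuous_on_subset[OF c]) auto
  thus "continuous_on UNIV (\<lambda>(a,b). g a0 a b)" by (simp add: o_def case_prod_beta')
qed

lemma schwarz3:
  assumes "smooth3 g"
  shows "px3 (pt3 g) t x p = pt3 (px3 g) t x p"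
    "pp3 (pt3 g) t x p = pt3 (pp3 g) t x p"
    "pp3 (px3 g) t x p = px3 (pp3 g) t x p"
proof -
  have s: "pdiff3 g" "pdiff3 (pt3 g)" "pdiff3 (px3 g)" "pdiff3 (pp3 g)"
    using smooth3_parts assms by blast+
  have c: "continuous_on UNIV (\<lambda>(a,b,c). px3 (pt3 g) a b c)" "continuous_on UNIV (\<lambda>(a,b,c). pt3 (px3 g) a b c)"
     "continuous_on UNIV (\<lambda>(a,b,c). pp3 (pt3 g) a b c)" "continuous_on UNIV (\<lambda>(a,b,c). pt3 (pp3 g) a b c)"
     "continuous_on UNIV (\<lambda>(a,b,c). pp3 (px3 g) a b c)" "continuous_on UNIV (\<lambda>(a,b,c). px3 (pp3 g) a b c)"
    using smooth3_parts assms by meson+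
  show "px3 (pt3 g) t x p = pt3 (px3 g) t x p"
    by (rule clairaut[of "\<lambda>a b. g a b p" "\<lambda>a b. pt3 g a b p" "\<lambda>a b. px3 g a b p"])
       (use s cont3_pairs(1)[OF c(1)] cont3_pairs(1)[OF c(2)] in \<open>auto simp: pdiff3_def\<close>)
  show "pp3 (pt3 g) t x p = pt3 (pp3 g) t x p"
    by (rule clairaut[of "\<lambda>a b. g a x b" "\<lambda>a b. pt3 g a x b" "\<lambda>a b. pp3 g a x b"])
       (use s cont3_pairs(2)[OF c(3)] cont3_pairs(2)[OF c(4)] in \<open>auto simp: pdiff3_def\<close>)
  show "pp3 (px3 g) t x p = px3 (pp3 g) t x p"
    by (rule clairaut[of "\<lambda>a b. g t a b" "\<lambda>a b. px3 g t a b" "\<lambda>a b. pp3 g t a b"])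
       (use s cont3_pairs(3)[OF c(5)] cont3_pairs(3)[OF c(6)] in \<open>auto simp: pdiff3_def\<close>)
qed

lemma schwarz2:
  assumes "smooth2 g"
  shows "px2 (pt2 g) t x = pt2 (px2 g) t x"
proof -
  have s: "pdiff2 g" "pdiff2 (pt2 g)" "pdiff2 (px2 g)"
    using smooth2_parts assms by blast+
  have c: "continuous_on UNIV (\<lambda>(a,b). px2 (pt2 g) a b)" "continuous_on UNIV (\<lambda>(a,b). pt2 (px2 g) a b)"
    using smooth2_parts assms by meson+
  show ?thesis
    by (rule clairaut[of g "pt2 g" "px2 g"]) (use s c in \<open>auto simp: pdiff2_def\<close>)
qed




lemma deriv_c: "deriv (\<lambda>s. c) x = (0::real)"
  by (rule DERIV_imp_deriv) (rule DERIV_const)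

lemma sum_atMost2: "(\<Sum>i\<le>(2::nat). f i) = f 0 + f 1 + (f 2::real)"
  by (simp add: numeral_2_eq_2)
lemma sum_atMost1: "(\<Sum>i\<le>(1::nat). f i) = f 0 + (f 1::real)"
  by simp
lemma sum_lessThan3: "(\<Sum>i<(3::nat). f i) = f 0 + f 1 + (f 2::real)"
  by (simp add: numeral_3_eq_3 numeral_2_eq_2)

lemma wpd_expl:
  assumes f: "\<And>t X W. f t X W = g t (X 0) (X 1) (X 2) (W 0) (W 1)"
  and dt: "((\<lambda>s. g s (X 0) (X 1) (X 2) (W 0) (W 1)) has_real_derivative gt) (at t)"
  and d0: "((\<lambda>s. g t s (X 1) (X 2) (W 0) (W 1)) has_real_derivative g0) (at (X 0))"
  and d1: "((\<lambda>s. g t (X 0) s (X 2) (W 0) (W 1)) has_real_derivative g1) (at (X 1))"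
  and d2: "((\<lambda>s. g t (X 0) (X 1) s (W 0) (W 1)) has_real_derivative g2) (at (X 2))"
  and e0: "((\<lambda>s. g t (X 0) (X 1) (X 2) s (W 1)) has_real_derivative h0) (at (W 0))"
  and e1: "((\<lambda>s. g t (X 0) (X 1) (X 2) (W 0) s) has_real_derivative h1) (at (W 1))"
  shows "wpd_t f t X W = gt" "wpd_x 0 f t X W = g0" "wpd_x 1 f t X W = g1" "wpd_x 2 f t X W = g2"
    "wpd_w 0 f t X W = h0" "wpd_w 1 f t X W = h1"
    "\<And>i. i \<ge> 3 \<Longrightarrow> wpd_x i f t X W = 0" "\<And>i. i \<ge> 2 \<Longrightarrow> wpd_w i f t X W = 0"
proof -
  show "wpd_t f t X W = gt" unfolding wpd_t_def f using dt by (rule DERIV_imp_deriv)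
  show "wpd_x 0 f t X W = g0" unfolding wpd_x_def f using d0 by (simp add: DERIV_imp_deriv)
  show "wpd_x 1 f t X W = g1" unfolding wpd_x_def f using d1 by (simp add: DERIV_imp_deriv)
  show "wpd_x 2 f t X W = g2" unfolding wpd_x_def f using d2 by (simp add: DERIV_imp_deriv)
  show "wpd_w 0 f t X W = h0" unfolding wpd_w_def f using e0 by (simp add: DERIV_imp_deriv)
  show "wpd_w 1 f t X W = h1" unfolding wpd_w_def f using e1 by (simp add: DERIV_imp_deriv)
  show "wpd_x i f t X W = 0" if "i \<ge> 3" for i
    unfolding wpd_x_def f using that by (simp add: deriv_c)
  show "wpd_w i f t X W = 0" if "i \<ge> 2" for i
    unfolding wpd_w_def f using that by (simp add: deriv_c)
qed

lemma totDw_expl: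
  assumes f: "\<And>t X W. f t X W = g t (X 0) (X 1) (X 2) (W 0) (W 1)"
  and dt: "((\<lambda>s. g s (X 0) (X 1) (X 2) (W 0) (W 1)) has_real_derivative gt) (at t)"
  and d0: "((\<lambda>s. g t s (X 1) (X 2) (W 0) (W 1)) has_real_derivative g0) (at (X 0))"
  and d1: "((\<lambda>s. g t (X 0) s (X 2) (W 0) (W 1)) has_real_derivative g1) (at (X 1))"
  and d2: "((\<lambda>s. g t (X 0) (X 1) s (W 0) (W 1)) has_real_derivative g2) (at (X 2))"
  and e0: "((\<lambda>s. g t (X 0) (X 1) (X 2) s (W 1)) has_real_derivative h0) (at (W 0))"
  and e1: "((\<lambda>s. g t (X 0) (X 1) (X 2) (W 0) s) has_real_derivative h1) (at (W 1))"
  shows "totDw f t X W = gt + X 1 * g0 + X 2 * g1 + X 3 * g2 + W 1 * h0 + W 2 * h1"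
proof -
  note w = wpd_expl[of f g, OF f dt d0 d1 d2 e0 e1]
  let ?a = "\<lambda>i. X (Suc i) * wpd_x i f t X W + W (Suc i) * wpd_w i f t X W"
  have "suminf ?a = sum ?a {..<3}"
    by (rule suminf_finite) (auto simp: w(7,8))
  also have "\<dots> = ?a 0 + ?a 1 + ?a 2" by (rule sum_lessThan3)
  also have "\<dots> = X 1 * g0 + X 2 * g1 + X 3 * g2 + W 1 * h0 + W 2 * h1"
    using w(2-6) w(8)[of 2, simplified] by (simp add: eval_nat_numeral)
  finally show ?thesis unfolding totDw_def w(1) by simp
qed

lemma pd_expl:
  assumes f: "\<And>t X. f t X = g t (X 0) (X 1) (X 2)"
  and dt: "((\<lambda>s. g s (X 0) (X 1) (X 2)) has_real_derivative gt) (at t)"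
  and d0: "((\<lambda>s. g t s (X 1) (X 2)) has_real_derivative g0) (at (X 0))"
  and d1: "((\<lambda>s. g t (X 0) s (X 2)) has_real_derivative g1) (at (X 1))"
  and d2: "((\<lambda>s. g t (X 0) (X 1) s) has_real_derivative g2) (at (X 2))"
  shows "pd_t f t X = gt" "pd_x 0 f t X = g0" "pd_x 1 f t X = g1" "pd_x 2 f t X = g2"
    "\<And>i. i \<ge> 3 \<Longrightarrow> pd_x i f t X = 0"
proof -
  show "pd_t f t X = gt" unfolding pd_t_def f using dt by (rule DERIV_imp_deriv)
  show "pd_x 0 f t X = g0" unfolding pd_x_def f using d0 by (simp add: DERIV_imp_deriv)
  show "pd_x 1 f t X = g1" unfolding pd_x_def f using d1 by (simp add: DERIV_imp_deriv)
  show "pd_x 2 f t X = g2" unfolding pd_x_def f using d2 by (simp add: DERIV_imp_deriv)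
  show "pd_x i f t X = 0" if "i \<ge> 3" for i
    unfolding pd_x_def f using that by (simp add: deriv_c)
qed

lemma totD_expl:
  assumes f: "\<And>t X. f t X = g t (X 0) (X 1) (X 2)"
  and dt: "((\<lambda>s. g s (X 0) (X 1) (X 2)) has_real_derivative gt) (at t)"
  and d0: "((\<lambda>s. g t s (X 1) (X 2)) has_real_derivative g0) (at (X 0))"
  and d1: "((\<lambda>s. g t (X 0) s (X 2)) has_real_derivative g1) (at (X 1))"
  and d2: "((\<lambda>s. g t (X 0) (X 1) s) has_real_derivative g2) (at (X 2))"
  shows "totD f t X = gt + X 1 * g0 + X 2 * g1 + X 3 * g2"
proof -
  note w = pd_expl[of f g, OF f dt d0 d1 d2]
  let ?a = "\<lambda>i. X (Suc i) * pd_x i f t X"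
  have "suminf ?a = sum ?a {..<3}"
    by (rule suminf_finite) (auto simp: w(5))
  also have "\<dots> = ?a 0 + ?a 1 + ?a 2" by (rule sum_lessThan3)
  also have "\<dots> = X 1 * g0 + X 2 * g1 + X 3 * g2"
    using w(2-4) by (simp add: eval_nat_numeral)
  finally show ?thesis unfolding totD_def w(1) by simp
qed




definition depXW :: "nat \<Rightarrow> nat \<Rightarrow> wjet_fun \<Rightarrow> bool" where
  "depXW n m f \<longleftrightarrow> (\<forall>t X W X' W'. (\<forall>i\<le>n. X i = X' i) \<longrightarrow> (\<forall>i\<le>m. W i = W' i) \<longrightarrow> f t X W = f t X' W')"

lemma dep_upd_x:
  assumes "depXW n m f" "\<not> i \<le> n"
  shows "f t (X(i:=s)) W = f t X W"
proof -
  have "\<forall>j\<le>n. (X(i:=s)) j = X j" using assms(2) by auto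
  thus ?thesis using assms(1) unfolding depXW_def by blast
qed

lemma dep_upd_w:
  assumes "depXW n m f" "\<not> i \<le> m"
  shows "f t X (W(i:=s)) = f t X W"
proof -
  have "\<forall>j\<le>m. (W(i:=s)) j = W j" using assms(2) by auto
  thus ?thesis using assms(1) unfolding depXW_def by blast
qed

lemma totDw_dep:
  assumes "depXW n m f"
  shows "depXW (Suc n) (Suc m) (totDw f)"
  unfolding depXW_def
proof (intro allI impI)
  fix t :: real and X W X' W' :: "nat \<Rightarrow> real"
  assume hx: "\<forall>i\<le>Suc n. X i = X' i" and hw: "\<forall>i\<le>Suc m. W i = W' i"
  have hx': "\<forall>i\<le>n. X i = X' i" using hx by auto
  have hw': "\<forall>i\<le>m. W i = W' i" using hw by auto
  have ft: "(\<lambda>s. f s X W) = (\<lambda>s. f s X' W')" using assms hx' hw' unfolding depXW_def by blast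
  have px: "wpd_x i f t X W = wpd_x i f t X' W'" for i
  proof (cases "i \<le> n")
    case True
    have "\<forall>j\<le>n. (X(i:=s)) j = (X'(i:=s)) j" for s using hx' by auto
    hence "(\<lambda>s. f t (X(i:=s)) W) = (\<lambda>s. f t (X'(i:=s)) W')"
      using assms hw' unfolding depXW_def by blast
    thus ?thesis using True hx' unfolding wpd_x_def by simp
  next
    case False
    thus ?thesis unfolding wpd_x_def dep_upd_x[OF assms False] by (simp add: deriv_c)
  qed
  have pw: "wpd_w i f t X W = wpd_w i f t X' W'" for i
  proof (cases "i \<le> m")
    case True
    have "\<forall>j\<le>m. (W(i:=s)) j = (W'(i:=s)) j" for s using hw' by auto
    hence "(\<lambda>s. f t X (W(i:=s))) = (\<lambda>s. f t X' (W'(i:=s)))"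
      using assms hx' unfolding depXW_def by blast
    thus ?thesis using True hw' unfolding wpd_w_def by simp
  next
    case False
    thus ?thesis unfolding wpd_w_def dep_upd_w[OF assms False] by (simp add: deriv_c)
  qed
  have tx: "X (Suc i) * wpd_x i f t X W = X' (Suc i) * wpd_x i f t X' W'" for i
  proof (cases "i \<le> n")
    case True thus ?thesis using hx px by simp
  next
    case False
    hence "wpd_x i f t X W = 0" unfolding wpd_x_def dep_upd_x[OF assms False] by (simp add: deriv_c)
    thus ?thesis using px by simp
  qed
  have tw: "W (Suc i) * wpd_w i f t X W = W' (Suc i) * wpd_w i f t X' W'" for i
  proof (cases "i \<le> m")
    case True thus ?thesis using hw pw by simp
  next
    case False
    hence "wpd_w i f t X W = 0" unfolding wpd_w_def dep_upd_w[OF assms False] by (simp add: deriv_c)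
    thus ?thesis using pw by simp
  qed
  show "totDw f t X W = totDw f t X' W'"
    unfolding totDw_def wpd_t_def ft using tx tw by simp
qed

lemma iter_dep:
  assumes "depXW 1 0 f"
  shows "depXW (Suc k) k ((totDw ^^ k) f)"
  using assms by (induction k) (auto intro: totDw_dep)

lemma lift3w_dep: "depXW 1 0 (lift3w F)"
  unfolding depXW_def lift3w_def by auto

fun apx :: "(nat \<Rightarrow> wjet_fun) \<Rightarrow> (nat \<Rightarrow> wjet_fun) \<Rightarrow> real \<Rightarrow> real \<Rightarrow> real \<Rightarrow> real \<Rightarrow> nat
    \<Rightarrow> (nat \<Rightarrow> real) \<times> (nat \<Rightarrow> real)" where
  "apx fk hk t a b c 0 = ((\<lambda>i. if i = 0 then a else if i = 1 then b else 0), (\<lambda>i. if i = 0 then c else 0))"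
| "apx fk hk t a b c (Suc k) = (let XW = apx fk hk t a b c k in
     ((fst XW)(k+2 := fk k t (fst XW) (snd XW)), (snd XW)(k+1 := hk k t (fst XW) (snd XW))))"

lemma apx_agree:
  "k \<le> j \<Longrightarrow> (\<forall>i\<le>Suc k. fst (apx fk hk t a b c j) i = fst (apx fk hk t a b c k) i)
      \<and> (\<forall>i\<le>k. snd (apx fk hk t a b c j) i = snd (apx fk hk t a b c k) i)"
proof (induction j)
  case 0 thus ?case by simp
next
  case (Suc j)
  show ?case
  proof (cases "k = Suc j")
    case True thus ?thesis by simp
  next
    case False
    hence "k \<le> j" using Suc by simp
    with Suc.IH show ?thesis by (auto simp: Let_def)
  qed
qed

lemma delta_exists_gen:
  assumes df: "\<And>k. depXW (Suc k) k (fk k)" and dh: "\<And>k. depXW (Suc k) k (hk k)"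
  shows "\<exists>X W. X 0 = a \<and> X 1 = b \<and> W 0 = c \<and> (\<forall>k. X (k+2) = fk k t X W \<and> W (Suc k) = hk k t X W)"
proof -
  let ?A = "apx fk hk t a b c"
  define X where "X = (\<lambda>i. fst (?A i) i)"
  define W where "W = (\<lambda>i. snd (?A i) i)"
  have agX: "X i = fst (?A k) i" if "i \<le> Suc k" for i k
  proof (cases "i \<le> k")
    case True thus ?thesis using apx_agree[of i k] unfolding X_def by auto
  next
    case False
    hence "i = Suc k" using that by simp
    thus ?thesis using apx_agree[of k "Suc k"] unfolding X_def by auto
  qed
  have agW: "W i = snd (?A k) i" if "i \<le> k" for i k
    using apx_agree[of i k] that unfolding W_def by auto
  have "X (k+2) = fk k t X W \<and> W (Suc k) = hk k t X W" for k
  proof -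
    have e1: "fk k t X W = fk k t (fst (?A k)) (snd (?A k))"
      using df[of k] agX agW unfolding depXW_def by blast
    have e2: "hk k t X W = hk k t (fst (?A k)) (snd (?A k))"
      using dh[of k] agX agW unfolding depXW_def by blast
    have "X (k+2) = fst (?A (Suc k)) (k+2)" using agX[of "k+2" "Suc k"] by simp
    also have "\<dots> = fk k t (fst (?A k)) (snd (?A k))" by (simp add: Let_def)
    finally have 1: "X (k+2) = fk k t X W" using e1 by simp
    have "W (Suc k) = snd (?A (Suc k)) (Suc k)" by (simp add: W_def)
    also have "\<dots> = hk k t (fst (?A k)) (snd (?A k))" by (simp add: Let_def)
    finally have 2: "W (Suc k) = hk k t X W" using e2 by simp
    show ?thesis using 1 2 by simp
  qed
  moreover have "X 0 = a" unfolding X_def by simp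
  moreover have "X 1 = b" using agX[of 1 0] by simp
  moreover have "W 0 = c" unfolding W_def by simp
  ultimately show ?thesis by blast
qed

lemma delta_exists:
  "\<exists>X W. (t, X, W) \<in> Delta F H \<and> X 0 = a \<and> X 1 = b \<and> W 0 = c"
proof -
  obtain X W where "X 0 = a \<and> X 1 = b \<and> W 0 = c \<and> (\<forall>k. X (k+2) = (totDw ^^ k) (lift3w F) t X W
      \<and> W (Suc k) = (totDw ^^ k) (lift3w H) t X W)"
    using delta_exists_gen[of "\<lambda>k. (totDw ^^ k) (lift3w F)" "\<lambda>k. (totDw ^^ k) (lift3w H)"]
      iter_dep[OF lift3w_dep] by blast
  thus ?thesis unfolding Delta_def by auto
qed




lemma pdiff4D:
  assumes "pdiff4 g"
  shows "((\<lambda>s. g s x p w) has_real_derivative pt4 g t x p w) (at t)"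
    "((\<lambda>s. g t s p w) has_real_derivative px4 g t x p w) (at x)"
    "((\<lambda>s. g t x s w) has_real_derivative pp4 g t x p w) (at p)"
    "((\<lambda>s. g t x p s) has_real_derivative pw4 g t x p w) (at w)"
  using assms unfolding pdiff4_def by blast+

lemma pdiff3D:
  assumes "pdiff3 g"
  shows "((\<lambda>s. g s x p) has_real_derivative pt3 g t x p) (at t)"
    "((\<lambda>s. g t s p) has_real_derivative px3 g t x p) (at x)"
    "((\<lambda>s. g t x s) has_real_derivative pp3 g t x p) (at p)"
  using assms unfolding pdiff3_def by blast+

lemma pdiff2D:
  assumes "pdiff2 g"
  shows "((\<lambda>s. g s x) has_real_derivative pt2 g t x) (at t)"
    "((\<lambda>s. g t s) has_real_derivative px2 g t x) (at x)"
  using assms unfolding pdiff2_def by blast+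

lemma pdiff3I:
  assumes "\<And>t x p. (\<lambda>s. g s x p) differentiable (at t)"
    "\<And>t x p. (\<lambda>s. g t s p) differentiable (at x)"
    "\<And>t x p. (\<lambda>s. g t x s) differentiable (at p)"
  shows "pdiff3 g"
  unfolding pdiff3_def pt3_def px3_def pp3_def
  using assms DERIV_deriv_iff_real_differentiable by blast

lemma pdiff2I:
  assumes "\<And>t x. (\<lambda>s. g s x) differentiable (at t)"
    "\<And>t x. (\<lambda>s. g t s) differentiable (at x)"
  shows "pdiff2 g"
  unfolding pdiff2_def pt2_def px2_def
  using assms DERIV_deriv_iff_real_differentiable by blast

lemma derivD: "(f has_real_derivative D) (at x) \<Longrightarrow> f differentiable (at x)"
  using real_differentiable_def by blast

lemma agree_at_point:
  fixes f1 f2 :: "real \<Rightarrow> real"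
  assumes "isCont f1 p" "isCont f2 p" "\<And>q. q \<noteq> p \<Longrightarrow> f1 q = f2 q"
  shows "f1 p = f2 p"
proof -
  have "(f1 \<longlongrightarrow> f1 p) (at p)" using assms(1) isCont_def by blast
  moreover have "eventually (\<lambda>q. f1 q = f2 q) (at p)"
    using assms(3) by (auto simp: eventually_at_filter)
  ultimately have "(f2 \<longlongrightarrow> f1 p) (at p)" by (rule Lim_transform_eventually)
  moreover have "(f2 \<longlongrightarrow> f2 p) (at p)" using assms(2) isCont_def by blast
  ultimately show ?thesis using tendsto_unique trivial_limit_at by (metis at_neq_bot)
qed

lemma eta_prol_1: "eta_prol a b 1 = (\<lambda>t X W. totDw b t X W - totDw a t X W * X 1)"
  using eta_prol.simps(2)[of a b 0] by simp
lemma eta_prol_2: "eta_prol a b 2 = (\<lambda>t X W. totDw (eta_prol a b 1) t X W - totDw a t X W * X 2)"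
  using eta_prol.simps(2)[of a b 1] by (simp add: numeral_2_eq_2)
lemma phi_lam_1: "phi_lam r f l 1 = (\<lambda>t X. totD (lift2 f) t X - totD (lift2 r) t X * X 1
            + lift3 l t X * (lift2 f t X - r t (X 0) * X 1))"
  using phi_lam.simps(2)[of r f l 0] by simp
lemma phi_lam_2: "phi_lam r f l 2 = (\<lambda>t X. totD (phi_lam r f l 1) t X - totD (lift2 r) t X * X 2
            + lift3 l t X * (phi_lam r f l 1 t X - r t (X 0) * X 2))"
  using phi_lam.simps(2)[of r f l 1] by (simp add: numeral_2_eq_2)

lemma totDw_lift4:
  assumes "pdiff4 g"
  shows "totDw (lift4 g) t X W = pt4 g t (X 0) (X 1) (W 0) + X 1 * px4 g t (X 0) (X 1) (W 0)
      + X 2 * pp4 g t (X 0) (X 1) (W 0) + W 1 * pw4 g t (X 0) (X 1) (W 0)"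
proof -
  have "totDw (lift4 g) t X W = pt4 g t (X 0) (X 1) (W 0) + X 1 * px4 g t (X 0) (X 1) (W 0)
      + X 2 * pp4 g t (X 0) (X 1) (W 0) + X 3 * 0 + W 1 * pw4 g t (X 0) (X 1) (W 0) + W 2 * 0"
    by (rule totDw_expl[where g="\<lambda>t a0 a1 a2 b0 b1. g t a0 a1 b0"])
       (auto simp: lift4_def intro!: pdiff4D[OF assms] DERIV_const)
  thus ?thesis by simp
qed

lemma totDw_lift3w:
  assumes "pdiff3 g"
  shows "totDw (lift3w g) t X W = pt3 g t (X 0) (X 1) + X 1 * px3 g t (X 0) (X 1) + X 2 * pp3 g t (X 0) (X 1)"
proof -
  have "totDw (lift3w g) t X W = pt3 g t (X 0) (X 1) + X 1 * px3 g t (X 0) (X 1)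
      + X 2 * pp3 g t (X 0) (X 1) + X 3 * 0 + W 1 * 0 + W 2 * 0"
    by (rule totDw_expl[where g="\<lambda>t a0 a1 a2 b0 b1. g t a0 a1"])
       (auto simp: lift3w_def intro!: pdiff3D[OF assms] DERIV_const)
  thus ?thesis by simp
qed

lemma Delta_facts:
  assumes "(t, X, W) \<in> Delta F H"
  shows "X 2 = F t (X 0) (X 1)" "W 1 = H t (X 0) (X 1)"
    "X 3 = totDw (lift3w F) t X W" "W 2 = totDw (lift3w H) t X W"
proof -
  have d: "\<forall>k. X (k + 2) = (totDw ^^ k) (lift3w F) t X W \<and> W (Suc k) = (totDw ^^ k) (lift3w H) t X W"
    using assms unfolding Delta_def by auto
  show "X 2 = F t (X 0) (X 1)" using d[rule_format, of 0] by (simp add: lift3w_def numeral_2_eq_2)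
  show "W 1 = H t (X 0) (X 1)" using d[rule_format, of 0] by (simp add: lift3w_def)
  show "X 3 = totDw (lift3w F) t X W" using d[rule_format, of 1] by (simp add: numeral_3_eq_3)
  show "W 2 = totDw (lift3w H) t X W" using d[rule_format, of 1] by (simp add: numeral_2_eq_2)
qed

locale core =
  fixes F H :: "real \<Rightarrow> real \<Rightarrow> real \<Rightarrow> real"
    and c xi eta psi :: "real \<Rightarrow> real \<Rightarrow> real \<Rightarrow> real \<Rightarrow> real"
    and \<rho> :: real
    and \<phi> \<phi>t \<phi>x \<phi>tt \<phi>tx \<phi>xt \<phi>xx :: "real \<Rightarrow> real \<Rightarrow> real"
    and z :: "real \<Rightarrow> real \<Rightarrow> real"
    and zeta :: "real \<Rightarrow> real \<Rightarrow> real \<Rightarrow> real"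
  assumes sF: "smooth3 F" and sH: "smooth3 H" and sc: "smooth4 c"
    and cnz: "\<And>t x p w. c t x p w \<noteq> 0"
    and sz: "smooth2 z" and szeta: "smooth3 zeta"
    and xi_eq: "xi = (\<lambda>t x p w. \<rho> * c t x p w)"
    and eta_eq: "eta = (\<lambda>t x p w. \<phi> t x * c t x p w)"
    and d\<phi>t: "\<And>t x. ((\<lambda>s. \<phi> s x) has_real_derivative \<phi>t t x) (at t)"
    and d\<phi>x: "\<And>t x. ((\<lambda>s. \<phi> t s) has_real_derivative \<phi>x t x) (at x)"
    and d\<phi>tt: "\<And>t x. ((\<lambda>s. \<phi>t s x) has_real_derivative \<phi>tt t x) (at t)"
    and d\<phi>tx: "\<And>t x. ((\<lambda>s. \<phi>t t s) has_real_derivative \<phi>tx t x) (at x)"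
    and d\<phi>xt: "\<And>t x. ((\<lambda>s. \<phi>x s x) has_real_derivative \<phi>xt t x) (at t)"
    and d\<phi>xx: "\<And>t x. ((\<lambda>s. \<phi>x t s) has_real_derivative \<phi>xx t x) (at x)"
    and gs: "gen_symmetry F H xi eta psi"
    and vz: "\<forall>t X W. prol_apply xi eta psi 0 (lift2w z) t X W = 0"
    and vzeta: "\<forall>(t, X, W) \<in> Delta F H. prol_apply xi eta psi 1 (lift3w zeta) t X W = 0"
    and fi: "func_indep z zeta"
    and zpnz: "\<forall>t X. pd_x 1 (lift3 zeta) t X \<noteq> 0"
    and nv: "\<rho> \<noteq> 0 \<or> (\<forall>t x. \<phi> t x \<noteq> 0)"
begin

lemma pdc: "pdiff4 c" "pdiff4 (pt4 c)" "pdiff4 (px4 c)" "pdiff4 (pp4 c)" "pdiff4 (pw4 c)"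
  using smooth4_parts sc by blast+

lemma pdF: "pdiff3 F" using smooth3_parts sF by blast
lemma pdH: "pdiff3 H" using smooth3_parts sH by blast
lemma pdzeta: "pdiff3 zeta" "pdiff3 (pt3 zeta)" "pdiff3 (px3 zeta)" "pdiff3 (pp3 zeta)"
  using smooth3_parts szeta by blast+
lemma pdz: "pdiff2 z" "pdiff2 (pt2 z)" "pdiff2 (px2 z)"
  using smooth2_parts sz by blast+

lemmas atoms = pdiff4D[OF pdc(1)] pdiff4D[OF pdc(2)] pdiff4D[OF pdc(3)] pdiff4D[OF pdc(4)] pdiff4D[OF pdc(5)]
  pdiff3D[OF pdF] pdiff3D[OF pdH] pdiff3D[OF pdzeta(1)] pdiff3D[OF pdzeta(2)] pdiff3D[OF pdzeta(3)]
  pdiff3D[OF pdzeta(4)] pdiff2D[OF pdz(1)] pdiff2D[OF pdz(2)] pdiff2D[OF pdz(3)]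
  d\<phi>t d\<phi>x d\<phi>tt d\<phi>tx d\<phi>xt d\<phi>xx

definition lamt :: "real \<Rightarrow> real \<Rightarrow> real \<Rightarrow> real \<Rightarrow> real" where
  "lamt = lam_tilde c F H"

lemma lamt_eq: "c t x p w * lamt t x p w = pt4 c t x p w + p * px4 c t x p w + pp4 c t x p w * F t x p + pw4 c t x p w * H t x p"
  unfolding lamt_def lam_tilde_def using cnz by simp

lemma A0: "\<rho> * pt2 z t x + \<phi> t x * px2 z t x = 0"
proof -
  let ?X = "\<lambda>i::nat. x" and ?W = "\<lambda>i::nat. 0::real"
  note w = wpd_expl[where f="lift2w z" and g="\<lambda>t a0 a1 a2 b0 b1. z t a0" and X="?X" and W="?W" and t=t]
  have "wpd_t (lift2w z) t ?X ?W = pt2 z t x"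
    by (rule w; auto simp: lift2w_def intro!: atoms DERIV_const)
  moreover have "wpd_x 0 (lift2w z) t ?X ?W = px2 z t x"
    by (rule w; auto simp: lift2w_def intro!: atoms DERIV_const)
  moreover have "wpd_w 0 (lift2w z) t ?X ?W = 0"
    by (rule w; auto simp: lift2w_def intro!: atoms DERIV_const)
  ultimately have w1: "wpd_t (lift2w z) t ?X ?W = pt2 z t x" "wpd_x 0 (lift2w z) t ?X ?W = px2 z t x"
     "wpd_w 0 (lift2w z) t ?X ?W = 0" by blast+
  have "prol_apply xi eta psi 0 (lift2w z) t ?X ?W = 0" using vz by blast
  hence "c t x x 0 * (\<rho> * pt2 z t x + \<phi> t x * px2 z t x) = 0"
    unfolding prol_apply_def using w1 by (simp add: lift2w_def lift4_def xi_eq eta_eq algebra_simps)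
  thus ?thesis using cnz by simp
qed


lemma Delta_expl:
  assumes "(t, X, W) \<in> Delta F H"
  shows "X 2 = F t (X 0) (X 1)" "W 1 = H t (X 0) (X 1)"
    "X 3 = pt3 F t (X 0) (X 1) + X 1 * px3 F t (X 0) (X 1) + X 2 * pp3 F t (X 0) (X 1)"
    "W 2 = pt3 H t (X 0) (X 1) + X 1 * px3 H t (X 0) (X 1) + X 2 * pp3 H t (X 0) (X 1)"
  using Delta_facts[OF assms] totDw_lift3w[OF pdF] totDw_lift3w[OF pdH] by simp_all

lemma totDw_xi: "totDw (lift4 xi) t X W = \<rho> * (pt4 c t (X 0) (X 1) (W 0) + X 1 * px4 c t (X 0) (X 1) (W 0)
      + X 2 * pp4 c t (X 0) (X 1) (W 0) + W 1 * pw4 c t (X 0) (X 1) (W 0))"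
proof -
  have "totDw (lift4 xi) t X W = \<rho> * pt4 c t (X 0) (X 1) (W 0) + X 1 * (\<rho> * px4 c t (X 0) (X 1) (W 0))
      + X 2 * (\<rho> * pp4 c t (X 0) (X 1) (W 0)) + X 3 * 0 + W 1 * (\<rho> * pw4 c t (X 0) (X 1) (W 0)) + W 2 * 0"
    by (rule totDw_expl[where g="\<lambda>t a0 a1 a2 b0 b1. \<rho> * c t a0 a1 b0"])
       (auto simp: lift4_def xi_eq intro!: atoms derivative_eq_intros)
  thus ?thesis by (simp add: algebra_simps)
qed

lemma eta1_expl: "eta_prol (lift4 xi) (lift4 eta) 1 t X W =
    c t (X 0) (X 1) (W 0) * (\<phi>t t (X 0) + X 1 * \<phi>x t (X 0))
    + (\<phi> t (X 0) - \<rho> * X 1) * (pt4 c t (X 0) (X 1) (W 0) + X 1 * px4 c t (X 0) (X 1) (W 0)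
      + X 2 * pp4 c t (X 0) (X 1) (W 0) + W 1 * pw4 c t (X 0) (X 1) (W 0))"
proof -
  have "totDw (lift4 eta) t X W =
      (\<phi>t t (X 0) * c t (X 0) (X 1) (W 0) + \<phi> t (X 0) * pt4 c t (X 0) (X 1) (W 0))
    + X 1 * (\<phi>x t (X 0) * c t (X 0) (X 1) (W 0) + \<phi> t (X 0) * px4 c t (X 0) (X 1) (W 0))
    + X 2 * (\<phi> t (X 0) * pp4 c t (X 0) (X 1) (W 0)) + X 3 * 0
    + W 1 * (\<phi> t (X 0) * pw4 c t (X 0) (X 1) (W 0)) + W 2 * 0"
    by (rule totDw_expl[where g="\<lambda>t a0 a1 a2 b0 b1. \<phi> t a0 * c t a0 a1 b0"])
       (auto simp: lift4_def eta_eq intro!: atoms derivative_eq_intros)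
  thus ?thesis unfolding eta_prol_1 totDw_xi by (simp add: algebra_simps)
qed

lemma B0: "\<rho> * pt3 zeta t a p + \<phi> t a * px3 zeta t a p
   + (\<phi>t t a + p * \<phi>x t a + (\<phi> t a - \<rho> * p) * lamt t a p w) * pp3 zeta t a p = 0"
proof -
  obtain X W where XW: "(t, X, W) \<in> Delta F H" "X 0 = a" "X 1 = p" "W 0 = w"
    using delta_exists by blast
  note D = Delta_expl[OF XW(1)]
  note wz = wpd_expl[where f="lift3w zeta" and g="\<lambda>t a0 a1 a2 b0 b1. zeta t a0 a1" and X=X and W=W and t=t]
  have w1: "wpd_t (lift3w zeta) t X W = pt3 zeta t a p"
    by (rule wz; auto simp: lift3w_def XW XW(3)[unfolded One_nat_def] intro!: atoms DERIV_const)
  have w2: "wpd_x 0 (lift3w zeta) t X W = px3 zeta t a p"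
    by (rule wz; auto simp: lift3w_def XW XW(3)[unfolded One_nat_def] intro!: atoms DERIV_const)
  have w3: "wpd_x 1 (lift3w zeta) t X W = pp3 zeta t a p"
    by (rule wz; auto simp: lift3w_def XW XW(3)[unfolded One_nat_def] intro!: atoms DERIV_const)
  have w4: "wpd_w 0 (lift3w zeta) t X W = 0"
    by (rule wz; auto simp: lift3w_def XW XW(3)[unfolded One_nat_def] intro!: atoms DERIV_const)
  have w5: "wpd_w 1 (lift3w zeta) t X W = 0"
    by (rule wz; auto simp: lift3w_def XW XW(3)[unfolded One_nat_def] intro!: atoms DERIV_const)
  have "prol_apply xi eta psi 1 (lift3w zeta) t X W = 0" using vzeta XW(1) by blast
  moreover have e1: "eta_prol (lift4 xi) (lift4 eta) 1 t X W = c t a p w * (\<phi>t t a + p * \<phi>x t a + (\<phi> t a - \<rho> * p) * lamt t a p w)"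
    unfolding eta1_expl using lamt_eq[of t a p w] D(1,2) XW by (simp add: algebra_simps)
  ultimately have "\<rho> * c t a p w * pt3 zeta t a p + \<phi> t a * c t a p w * px3 zeta t a p
     + c t a p w * (\<phi>t t a + p * \<phi>x t a + (\<phi> t a - \<rho> * p) * lamt t a p w) * pp3 zeta t a p = 0"
    unfolding prol_apply_def sum_atMost1 e1 using w1 w2 w3 w4 w5
    by (simp add: lift4_def xi_eq eta_eq XW XW(3)[unfolded One_nat_def])
  hence "c t a p w * (\<rho> * pt3 zeta t a p + \<phi> t a * px3 zeta t a p
   + (\<phi>t t a + p * \<phi>x t a + (\<phi> t a - \<rho> * p) * lamt t a p w) * pp3 zeta t a p) = 0"
    by (simp add: algebra_simps)
  thus ?thesis using cnz by simp
qed


definition lam :: "real \<Rightarrow> real \<Rightarrow> real \<Rightarrow> real" where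
  "lam t x p = lamt t x p 0"

lemma lamt_cont: "isCont (\<lambda>q. lamt t x q w) p"
  unfolding lamt_def lam_tilde_def
  by (auto intro!: continuous_intros atoms[THEN DERIV_isCont] cnz)

lemma lamt_indep0:
  assumes "\<phi> t x - \<rho> * p \<noteq> 0"
  shows "lamt t x p w = lamt t x p 0"
proof -
  have zp: "pp3 zeta t x p \<noteq> 0"
  proof -
    have "pd_x 1 (lift3 zeta) (t) (\<lambda>i. if i = 0 then x else p) = pp3 zeta t x p"
      unfolding pd_x_def lift3_def pp3_def by (simp add: One_nat_def)
    thus ?thesis using zpnz by metis
  qed
  have "(\<phi> t x - \<rho> * p) * (lamt t x p w - lamt t x p 0) * pp3 zeta t x p = 0"
    using B0[of t x p w] B0[of t x p 0] by (simp add: algebra_simps)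
  thus ?thesis using assms zp by simp
qed

lemma lam_indep: "lamt t x p w = lam t x p"
proof (cases "\<phi> t x - \<rho> * p = 0")
  case False thus ?thesis using lamt_indep0 unfolding lam_def by blast
next
  case True
  have r: "\<rho> \<noteq> 0" using nv True by auto
  have "(\<lambda>q. lamt t x q w) p = (\<lambda>q. lamt t x q 0) p"
  proof (rule agree_at_point[OF lamt_cont lamt_cont])
    fix q assume "q \<noteq> p"
    hence "\<phi> t x - \<rho> * q \<noteq> 0" using True r by (auto simp: algebra_simps)
    thus "lamt t x q w = lamt t x q 0" by (rule lamt_indep0)
  qed
  thus ?thesis unfolding lam_def by simp
qed

lemma lam_expl: "lam t x p = (pt4 c t x p 0 + px4 c t x p 0 * p + pp4 c t x p 0 * F t x p + pw4 c t x p 0 * H t x p) / c t x p 0"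
  unfolding lam_def lamt_def lam_tilde_def ..

lemma pdlam: "pdiff3 lam"
proof (rule pdiff3I)
  fix t x p
  show "(\<lambda>s. lam s x p) differentiable (at t)"
    unfolding lam_expl by (auto intro!: derivative_intros atoms[THEN derivD] cnz)
  show "(\<lambda>s. lam t s p) differentiable (at x)"
    unfolding lam_expl by (auto intro!: derivative_intros atoms[THEN derivD] cnz)
  show "(\<lambda>s. lam t x s) differentiable (at p)"
    unfolding lam_expl by (auto intro!: derivative_intros atoms[THEN derivD] cnz)
qed

lemmas latoms = pdiff3D[OF pdlam]


definition Ph1 :: "real \<Rightarrow> real \<Rightarrow> real \<Rightarrow> real" where
  "Ph1 t a p = \<phi>t t a + p * \<phi>x t a + lam t a p * (\<phi> t a - \<rho> * p)"
definition Ph1t :: "real \<Rightarrow> real \<Rightarrow> real \<Rightarrow> real" where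
  "Ph1t t a p = \<phi>tt t a + p * \<phi>xt t a + pt3 lam t a p * (\<phi> t a - \<rho> * p) + lam t a p * \<phi>t t a"
definition Ph1x :: "real \<Rightarrow> real \<Rightarrow> real \<Rightarrow> real" where
  "Ph1x t a p = \<phi>tx t a + p * \<phi>xx t a + px3 lam t a p * (\<phi> t a - \<rho> * p) + lam t a p * \<phi>x t a"
definition Ph1p :: "real \<Rightarrow> real \<Rightarrow> real \<Rightarrow> real" where
  "Ph1p t a p = \<phi>x t a + pp3 lam t a p * (\<phi> t a - \<rho> * p) - \<rho> * lam t a p"
definition Ph2 :: "real \<Rightarrow> real \<Rightarrow> real \<Rightarrow> real \<Rightarrow> real" where
  "Ph2 t a p q = Ph1t t a p + p * Ph1x t a p + q * Ph1p t a p + lam t a p * (Ph1 t a p - \<rho> * q)"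

lemma dPh1:
  "((\<lambda>s. Ph1 s a p) has_real_derivative Ph1t t a p) (at t)"
  "((\<lambda>s. Ph1 t s p) has_real_derivative Ph1x t a p) (at a)"
  "((\<lambda>s. Ph1 t a s) has_real_derivative Ph1p t a p) (at p)"
  unfolding Ph1_def Ph1t_def Ph1x_def Ph1p_def
  by (auto intro!: derivative_eq_intros atoms latoms simp: algebra_simps)

lemma totD_lift2_phi: "totD (lift2 \<phi>) t X = \<phi>t t (X 0) + X 1 * \<phi>x t (X 0)"
proof -
  have "totD (lift2 \<phi>) t X = \<phi>t t (X 0) + X 1 * \<phi>x t (X 0) + X 2 * 0 + X 3 * 0"
    by (rule totD_expl[where g="\<lambda>t a0 a1 a2. \<phi> t a0"]) (auto simp: lift2_def intro!: atoms DERIV_const)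
  thus ?thesis by simp
qed

lemma totD_lift2_const: "totD (lift2 (\<lambda>t x. k)) t X = 0"
proof -
  have "totD (lift2 (\<lambda>t x. k)) t X = 0 + X 1 * 0 + X 2 * 0 + X 3 * 0"
    by (rule totD_expl[where g="\<lambda>t a0 a1 a2. k"]) (auto simp: lift2_def intro!: DERIV_const)
  thus ?thesis by simp
qed

lemma phi1_eq: "phi_lam (\<lambda>t x. \<rho>) \<phi> lam 1 t X = Ph1 t (X 0) (X 1)"
  unfolding phi_lam_1 totD_lift2_phi totD_lift2_const Ph1_def by (simp add: lift3_def lift2_def)

lemma phi2_eq: "phi_lam (\<lambda>t x. \<rho>) \<phi> lam 2 t X = Ph2 t (X 0) (X 1) (X 2)"
proof -
  have e: "phi_lam (\<lambda>t x. \<rho>) \<phi> lam 1 = (\<lambda>t X. Ph1 t (X 0) (X 1))" using phi1_eq by (intro ext) simp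
  have "totD (phi_lam (\<lambda>t x. \<rho>) \<phi> lam 1) t X = Ph1t t (X 0) (X 1) + X 1 * Ph1x t (X 0) (X 1) + X 2 * Ph1p t (X 0) (X 1) + X 3 * 0"
    unfolding e by (rule totD_expl[where g="\<lambda>t a0 a1 a2. Ph1 t a0 a1"]) (auto intro!: dPh1 DERIV_const)
  thus ?thesis unfolding phi_lam_2 totD_lift2_const phi1_eq Ph2_def by (simp add: lift3_def)
qed

lemma eta1_G: "eta_prol (lift4 xi) (lift4 eta) 1 t X W =
   c t (X 0) (X 1) (W 0) * (\<phi>t t (X 0) + X 1 * \<phi>x t (X 0)) + (\<phi> t (X 0) - \<rho> * X 1) *
     (c t (X 0) (X 1) (W 0) * lam t (X 0) (X 1) + (X 2 - F t (X 0) (X 1)) * pp4 c t (X 0) (X 1) (W 0)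
      + (W 1 - H t (X 0) (X 1)) * pw4 c t (X 0) (X 1) (W 0))"
  unfolding eta1_expl using lamt_eq[of t "X 0" "X 1" "W 0"] lam_indep[of t "X 0" "X 1" "W 0"]
  by (simp add: algebra_simps)

lemma eta1_Delta:
  assumes "(t, X, W) \<in> Delta F H"
  shows "eta_prol (lift4 xi) (lift4 eta) 1 t X W = c t (X 0) (X 1) (W 0) * Ph1 t (X 0) (X 1)"
  unfolding eta1_G Ph1_def using Delta_expl[OF assms] by (simp add: algebra_simps)


end


context core begin

lemma eta2_Delta:
  assumes XW: "(t, X, W) \<in> Delta F H"
  shows "eta_prol (lift4 xi) (lift4 eta) 2 t X W = c t (X 0) (X 1) (W 0) * Ph2 t (X 0) (X 1) (X 2)"
proof -
  note D = Delta_expl[OF XW]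
  define G where "G = (\<lambda>t a0 a1 a2 b0 b1. c t a0 a1 b0 * (\<phi>t t a0 + a1 * \<phi>x t a0) + (\<phi> t a0 - \<rho> * a1) *
     (c t a0 a1 b0 * lam t a0 a1 + (a2 - F t a0 a1) * pp4 c t a0 a1 b0
      + (b1 - H t a0 a1) * pw4 c t a0 a1 b0))"
  have Ge: "eta_prol (lift4 xi) (lift4 eta) 1 t X W = G t (X 0) (X 1) (X 2) (W 0) (W 1)" for t X W
    unfolding eta1_G G_def ..
  let ?a = "X 0" and ?p = "X 1" and ?w = "W 0"
  let ?c = "c t ?a ?p ?w" and ?L = "lam t ?a ?p" and ?d = "\<phi> t ?a - \<rho> * ?p"
  let ?cp = "pp4 c t ?a ?p ?w" and ?cw = "pw4 c t ?a ?p ?w"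
  have dt: "((\<lambda>s. G s (X 0) (X 1) (X 2) (W 0) (W 1)) has_real_derivative
     pt4 c t ?a ?p ?w * (\<phi>t t ?a + ?p * \<phi>x t ?a) + ?c * (\<phi>tt t ?a + ?p * \<phi>xt t ?a) + \<phi>t t ?a * (?c * ?L)
       + ?d * (pt4 c t ?a ?p ?w * ?L + ?c * pt3 lam t ?a ?p - pt3 F t ?a ?p * ?cp - pt3 H t ?a ?p * ?cw)) (at t)"
    unfolding G_def by (auto intro!: derivative_eq_intros atoms latoms simp: D(1,2)[simplified] algebra_simps)
  have d0: "((\<lambda>s. G t s (X 1) (X 2) (W 0) (W 1)) has_real_derivative
     px4 c t ?a ?p ?w * (\<phi>t t ?a + ?p * \<phi>x t ?a) + ?c * (\<phi>tx t ?a + ?p * \<phi>xx t ?a) + \<phi>x t ?a * (?c * ?L)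
       + ?d * (px4 c t ?a ?p ?w * ?L + ?c * px3 lam t ?a ?p - px3 F t ?a ?p * ?cp - px3 H t ?a ?p * ?cw)) (at ?a)"
    unfolding G_def by (auto intro!: derivative_eq_intros atoms latoms simp: D(1,2)[simplified] algebra_simps)
  have d1: "((\<lambda>s. G t (X 0) s (X 2) (W 0) (W 1)) has_real_derivative
     ?cp * (\<phi>t t ?a + ?p * \<phi>x t ?a) + ?c * \<phi>x t ?a - \<rho> * (?c * ?L)
       + ?d * (?cp * ?L + ?c * pp3 lam t ?a ?p - pp3 F t ?a ?p * ?cp - pp3 H t ?a ?p * ?cw)) (at ?p)"
    unfolding G_def by (auto intro!: derivative_eq_intros atoms latoms simp: D(1,2)[simplified] algebra_simps)
  have d2: "((\<lambda>s. G t (X 0) (X 1) s (W 0) (W 1)) has_real_derivative ?d * ?cp) (at (X 2))"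
    unfolding G_def by (auto intro!: derivative_eq_intros atoms latoms simp: D(1,2)[simplified] algebra_simps)
  have e0: "((\<lambda>s. G t (X 0) (X 1) (X 2) s (W 1)) has_real_derivative
     ?cw * (\<phi>t t ?a + ?p * \<phi>x t ?a) + ?d * (?cw * ?L)) (at ?w)"
    unfolding G_def by (auto intro!: derivative_eq_intros atoms latoms simp: D(1,2)[simplified] algebra_simps)
  have e1: "((\<lambda>s. G t (X 0) (X 1) (X 2) (W 0) s) has_real_derivative ?d * ?cw) (at (W 1))"
    unfolding G_def by (auto intro!: derivative_eq_intros atoms latoms simp: D(1,2)[simplified] algebra_simps)
  note tot = totDw_expl[where g=G, OF Ge dt d0 d1 d2 e0 e1]
  have ct: "pt4 c t ?a ?p ?w = ?c * ?L - ?p * px4 c t ?a ?p ?w - ?cp * F t ?a ?p - ?cw * H t ?a ?p"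
    using lamt_eq[of t ?a ?p ?w] lam_indep[of t ?a ?p ?w] by (simp add: algebra_simps)
  show ?thesis
    unfolding eta_prol_2 tot totDw_xi Ph2_def Ph1_def Ph1t_def Ph1x_def Ph1p_def ct
    using D by (simp add: algebra_simps)
qed

lemma symF: "\<rho> * pt3 F t a p + \<phi> t a * px3 F t a p + Ph1 t a p * pp3 F t a p = Ph2 t a p (F t a p)"
proof -
  obtain X W where XW: "(t, X, W) \<in> Delta F H" "X 0 = a" "X 1 = p" "W 0 = 0"
    using delta_exists by blast
  note D = Delta_expl[OF XW(1)]
  note wz = wpd_expl[where f="\<lambda>t X W. X 2 - F t (X 0) (X 1)" and g="\<lambda>t a0 a1 a2 b0 b1. a2 - F t a0 a1" and X=X and W=W and t=t]
  have w1: "wpd_t (\<lambda>t X W. X 2 - F t (X 0) (X 1)) t X W = - pt3 F t a p"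
    by (rule wz; auto simp: XW XW(3)[unfolded One_nat_def] intro!: derivative_eq_intros atoms)
  have w2: "wpd_x 0 (\<lambda>t X W. X 2 - F t (X 0) (X 1)) t X W = - px3 F t a p"
    by (rule wz; auto simp: XW XW(3)[unfolded One_nat_def] intro!: derivative_eq_intros atoms)
  have w3: "wpd_x 1 (\<lambda>t X W. X 2 - F t (X 0) (X 1)) t X W = - pp3 F t a p"
    by (rule wz; auto simp: XW XW(3)[unfolded One_nat_def] intro!: derivative_eq_intros atoms)
  have w4: "wpd_x 2 (\<lambda>t X W. X 2 - F t (X 0) (X 1)) t X W = 1"
    by (rule wz; auto simp: XW XW(3)[unfolded One_nat_def] intro!: derivative_eq_intros atoms)
  have w5: "wpd_w 0 (\<lambda>t X W. X 2 - F t (X 0) (X 1)) t X W = 0"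
    by (rule wz; auto simp: XW XW(3)[unfolded One_nat_def] intro!: derivative_eq_intros atoms)
  have w6: "wpd_w 1 (\<lambda>t X W. X 2 - F t (X 0) (X 1)) t X W = 0"
    by (rule wz; auto simp: XW XW(3)[unfolded One_nat_def] intro!: derivative_eq_intros atoms)
  have w7: "wpd_w 2 (\<lambda>t X W. X 2 - F t (X 0) (X 1)) t X W = 0"
    by (rule wz(8); auto simp: XW XW(3)[unfolded One_nat_def] intro!: derivative_eq_intros atoms)
  have "prol_apply xi eta psi 2 (\<lambda>t X W. X 2 - F t (X 0) (X 1)) t X W = 0"
    using gs XW(1) unfolding gen_symmetry_def by blast
  hence "\<rho> * c t a p 0 * (- pt3 F t a p) + \<phi> t a * c t a p 0 * (- px3 F t a p)
     + c t a p 0 * Ph1 t a p * (- pp3 F t a p) + c t a p 0 * Ph2 t a p (F t a p) = 0"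
    unfolding prol_apply_def sum_atMost2 eta1_Delta[OF XW(1)] eta2_Delta[OF XW(1)]
    using w1 w2 w3 w4 w5 w6 w7 D(1) by (simp add: lift4_def xi_eq eta_eq XW XW(3)[unfolded One_nat_def])
  hence "c t a p 0 * (\<rho> * pt3 F t a p + \<phi> t a * px3 F t a p + Ph1 t a p * pp3 F t a p - Ph2 t a p (F t a p)) = 0"
    by (simp add: algebra_simps)
  thus ?thesis using cnz by simp
qed

lemma lam_sym: "lambda_symmetry F (\<lambda>t x. \<rho>) \<phi> lam"
  unfolding lambda_symmetry_def
proof (intro allI impI)
  fix t :: real and X :: "nat \<Rightarrow> real" assume X2: "X 2 = F t (X 0) (X 1)"
  note pz = pd_expl[where f="\<lambda>t X. X 2 - F t (X 0) (X 1)" and g="\<lambda>t a0 a1 a2. a2 - F t a0 a1" and X=X and t=t]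
  have p1: "pd_t (\<lambda>t X. X 2 - F t (X 0) (X 1)) t X = - pt3 F t (X 0) (X 1)"
    by (rule pz; auto intro!: derivative_eq_intros atoms)
  have p2: "pd_x 0 (\<lambda>t X. X 2 - F t (X 0) (X 1)) t X = - px3 F t (X 0) (X 1)"
    by (rule pz; auto intro!: derivative_eq_intros atoms)
  have p3: "pd_x 1 (\<lambda>t X. X 2 - F t (X 0) (X 1)) t X = - pp3 F t (X 0) (X 1)"
    by (rule pz; auto intro!: derivative_eq_intros atoms)
  have p4: "pd_x 2 (\<lambda>t X. X 2 - F t (X 0) (X 1)) t X = 1"
    by (rule pz; auto intro!: derivative_eq_intros atoms)
  show "lam_prol_apply (\<lambda>t x. \<rho>) \<phi> lam 2 (\<lambda>t X. X 2 - F t (X 0) (X 1)) t X = 0"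
    unfolding lam_prol_apply_def sum_atMost2 p1 p2 p3 p4 phi2_eq
    using symF[of t "X 0" "X 1"] X2 phi1_eq[of t X] by (simp add: lift2_def algebra_simps)
qed

end


context core begin

lemma B: "\<rho> * pt3 zeta t a p + \<phi> t a * px3 zeta t a p + Ph1 t a p * pp3 zeta t a p = 0"
  using B0[of t a p 0] unfolding Ph1_def lam_def by (simp add: algebra_simps)

lemma deriv_zero_unique:
  assumes "\<And>s. f s = (0::real)" "(f has_real_derivative D) (at x)"
  shows "D = 0"
proof -
  have "f = (\<lambda>s. 0)" using assms(1) by auto
  hence "(f has_real_derivative 0) (at x)" by simp
  thus ?thesis using assms(2) DERIV_unique by blast
qed

lemma Bt: "\<rho> * pt3 (pt3 zeta) t a p + \<phi>t t a * px3 zeta t a p + \<phi> t a * pt3 (px3 zeta) t a p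
    + Ph1t t a p * pp3 zeta t a p + Ph1 t a p * pt3 (pp3 zeta) t a p = 0"
  by (rule deriv_zero_unique[where f="\<lambda>s. \<rho> * pt3 zeta s a p + \<phi> s a * px3 zeta s a p + Ph1 s a p * pp3 zeta s a p" and x=t, OF B])
     (auto intro!: derivative_eq_intros atoms dPh1)

lemma Bx: "\<rho> * px3 (pt3 zeta) t a p + \<phi>x t a * px3 zeta t a p + \<phi> t a * px3 (px3 zeta) t a p
    + Ph1x t a p * pp3 zeta t a p + Ph1 t a p * px3 (pp3 zeta) t a p = 0"
  by (rule deriv_zero_unique[where f="\<lambda>s. \<rho> * pt3 zeta t s p + \<phi> t s * px3 zeta t s p + Ph1 t s p * pp3 zeta t s p" and x=a, OF B])
     (auto intro!: derivative_eq_intros atoms dPh1)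

lemma Bp: "\<rho> * pp3 (pt3 zeta) t a p + \<phi> t a * pp3 (px3 zeta) t a p
    + Ph1p t a p * pp3 zeta t a p + Ph1 t a p * pp3 (pp3 zeta) t a p = 0"
  by (rule deriv_zero_unique[where f="\<lambda>s. \<rho> * pt3 zeta t a s + \<phi> t a * px3 zeta t a s + Ph1 t a s * pp3 zeta t a s" and x=p, OF B])
     (auto intro!: derivative_eq_intros atoms dPh1)

lemma At: "\<rho> * pt2 (pt2 z) t a + \<phi>t t a * px2 z t a + \<phi> t a * pt2 (px2 z) t a = 0"
  by (rule deriv_zero_unique[where f="\<lambda>s. \<rho> * pt2 z s a + \<phi> s a * px2 z s a" and x=t, OF A0])
     (auto intro!: derivative_eq_intros atoms)

lemma Ax: "\<rho> * px2 (pt2 z) t a + \<phi>x t a * px2 z t a + \<phi> t a * px2 (px2 z) t a = 0"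
  by (rule deriv_zero_unique[where f="\<lambda>s. \<rho> * pt2 z t s + \<phi> t s * px2 z t s" and x=a, OF A0])
     (auto intro!: derivative_eq_intros atoms)

lemma totD_zeta: "totD (lift3 zeta) t X = pt3 zeta t (X 0) (X 1) + X 1 * px3 zeta t (X 0) (X 1) + X 2 * pp3 zeta t (X 0) (X 1)"
proof -
  have "totD (lift3 zeta) t X = pt3 zeta t (X 0) (X 1) + X 1 * px3 zeta t (X 0) (X 1) + X 2 * pp3 zeta t (X 0) (X 1) + X 3 * 0"
    by (rule totD_expl[where g="\<lambda>t a0 a1 a2. zeta t a0 a1"]) (auto simp: lift3_def intro!: atoms DERIV_const)
  thus ?thesis by simp
qed

lemma totD_z: "totD (lift2 z) t X = pt2 z t (X 0) + X 1 * px2 z t (X 0)"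
proof -
  have "totD (lift2 z) t X = pt2 z t (X 0) + X 1 * px2 z t (X 0) + X 2 * 0 + X 3 * 0"
    by (rule totD_expl[where g="\<lambda>t a0 a1 a2. z t a0"]) (auto simp: lift2_def intro!: atoms DERIV_const)
  thus ?thesis by simp
qed

definition Q :: "real \<Rightarrow> real \<Rightarrow> real \<Rightarrow> real \<Rightarrow> real" where
  "Q t a0 a1 a2 = (pt3 zeta t a0 a1 + a1 * px3 zeta t a0 a1 + a2 * pp3 zeta t a0 a1) / (pt2 z t a0 + a1 * px2 z t a0)"

lemma zz_eq: "zeta_z z zeta t X = Q t (X 0) (X 1) (X 2)"
  unfolding zeta_z_def totD_zeta totD_z Q_def ..

lemma I3:
  assumes M: "totD (lift2 z) t X \<noteq> 0"
  shows "lam_prol_apply (\<lambda>t x. \<rho>) \<phi> lam 2 (zeta_z z zeta) t X = 0"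
    "pd_x 2 (zeta_z z zeta) t X \<noteq> 0"
proof -
  let ?a = "X 0" and ?p = "X 1" and ?q = "X 2"
  define N where "N = pt3 zeta t ?a ?p + ?p * px3 zeta t ?a ?p + ?q * pp3 zeta t ?a ?p"
  define M where "M = pt2 z t ?a + ?p * px2 z t ?a"
  have Mnz: "M \<noteq> 0" using M unfolding totD_z M_def .
  define Nt where "Nt = pt3 (pt3 zeta) t ?a ?p + ?p * pt3 (px3 zeta) t ?a ?p + ?q * pt3 (pp3 zeta) t ?a ?p"
  define N0 where "N0 = px3 (pt3 zeta) t ?a ?p + ?p * px3 (px3 zeta) t ?a ?p + ?q * px3 (pp3 zeta) t ?a ?p"
  define N1 where "N1 = pp3 (pt3 zeta) t ?a ?p + px3 zeta t ?a ?p + ?p * pp3 (px3 zeta) t ?a ?p + ?q * pp3 (pp3 zeta) t ?a ?p"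
  define Mt where "Mt = pt2 (pt2 z) t ?a + ?p * pt2 (px2 z) t ?a"
  define M0 where "M0 = px2 (pt2 z) t ?a + ?p * px2 (px2 z) t ?a"
  define M1 where "M1 = px2 z t ?a"
  have fe: "\<And>t X. zeta_z z zeta t X = Q t (X 0) (X 1) (X 2)" by (rule zz_eq)
  note pz = pd_expl[where f="zeta_z z zeta" and g=Q and X=X and t=t, OF fe]
  have q1: "pd_t (zeta_z z zeta) t X = (Nt * M - N * Mt) / (M * M)"
    by (rule pz) (use Mnz in \<open>auto simp: Q_def N_def M_def Nt_def Mt_def algebra_simps intro!: derivative_eq_intros atoms\<close>)
  have q2: "pd_x 0 (zeta_z z zeta) t X = (N0 * M - N * M0) / (M * M)"
    by (rule pz) (use Mnz in \<open>auto simp: Q_def N_def M_def N0_def M0_def algebra_simps intro!: derivative_eq_intros atoms\<close>)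
  have q3: "pd_x 1 (zeta_z z zeta) t X = (N1 * M - N * M1) / (M * M)"
    by (rule pz) (use Mnz in \<open>auto simp: Q_def N_def M_def N1_def M1_def algebra_simps intro!: derivative_eq_intros atoms\<close>)
  have q4: "pd_x 2 (zeta_z z zeta) t X = (pp3 zeta t ?a ?p * M - N * 0) / (M * M)"
    by (rule pz) (use Mnz in \<open>auto simp: Q_def N_def M_def intro!: derivative_eq_intros atoms\<close>)
  have s1: "px3 (pt3 zeta) t ?a ?p = pt3 (px3 zeta) t ?a ?p" "pp3 (pt3 zeta) t ?a ?p = pt3 (pp3 zeta) t ?a ?p"
    "pp3 (px3 zeta) t ?a ?p = px3 (pp3 zeta) t ?a ?p" using schwarz3[OF szeta] by blast+
  have s2: "px2 (pt2 z) t ?a = pt2 (px2 z) t ?a" using schwarz2[OF sz] by blast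
  have YN: "\<rho> * Nt + \<phi> t ?a * N0 + Ph1 t ?a ?p * N1 + Ph2 t ?a ?p ?q * pp3 zeta t ?a ?p = - \<rho> * lam t ?a ?p * N"
  proof -
    have "\<rho> * Nt + \<phi> t ?a * N0 + Ph1 t ?a ?p * N1 + Ph2 t ?a ?p ?q * pp3 zeta t ?a ?p
       = (\<rho> * pt3 (pt3 zeta) t ?a ?p + \<phi>t t ?a * px3 zeta t ?a ?p + \<phi> t ?a * pt3 (px3 zeta) t ?a ?p
    + Ph1t t ?a ?p * pp3 zeta t ?a ?p + Ph1 t ?a ?p * pt3 (pp3 zeta) t ?a ?p)
       + ?p * (\<rho> * px3 (pt3 zeta) t ?a ?p + \<phi>x t ?a * px3 zeta t ?a ?p + \<phi> t ?a * px3 (px3 zeta) t ?a ?p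
    + Ph1x t ?a ?p * pp3 zeta t ?a ?p + Ph1 t ?a ?p * px3 (pp3 zeta) t ?a ?p)
       + ?q * (\<rho> * pp3 (pt3 zeta) t ?a ?p + \<phi> t ?a * pp3 (px3 zeta) t ?a ?p
    + Ph1p t ?a ?p * pp3 zeta t ?a ?p + Ph1 t ?a ?p * pp3 (pp3 zeta) t ?a ?p)
       + lam t ?a ?p * (\<rho> * pt3 zeta t ?a ?p + \<phi> t ?a * px3 zeta t ?a ?p + Ph1 t ?a ?p * pp3 zeta t ?a ?p)
       - \<rho> * lam t ?a ?p * N"
      unfolding Nt_def N0_def N1_def N_def Ph2_def s1
      by (simp add: Ph1_def algebra_simps)
    thus ?thesis using Bt[of t ?a ?p] Bx[of t ?a ?p] Bp[of t ?a ?p] B[of t ?a ?p] by simp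
  qed
  have YM: "\<rho> * Mt + \<phi> t ?a * M0 + Ph1 t ?a ?p * M1 = - \<rho> * lam t ?a ?p * M"
  proof -
    have "\<rho> * Mt + \<phi> t ?a * M0 + Ph1 t ?a ?p * M1 =
       (\<rho> * pt2 (pt2 z) t ?a + \<phi>t t ?a * px2 z t ?a + \<phi> t ?a * pt2 (px2 z) t ?a)
     + ?p * (\<rho> * px2 (pt2 z) t ?a + \<phi>x t ?a * px2 z t ?a + \<phi> t ?a * px2 (px2 z) t ?a)
     + lam t ?a ?p * (\<rho> * pt2 z t ?a + \<phi> t ?a * px2 z t ?a) - \<rho> * lam t ?a ?p * M"
      unfolding Mt_def M0_def M1_def M_def s2 by (simp add: Ph1_def algebra_simps)
    thus ?thesis using At[of t ?a] Ax[of t ?a] A0[of t ?a] by simp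
  qed
  have "lam_prol_apply (\<lambda>t x. \<rho>) \<phi> lam 2 (zeta_z z zeta) t X
     = ((\<rho> * Nt + \<phi> t ?a * N0 + Ph1 t ?a ?p * N1 + Ph2 t ?a ?p ?q * pp3 zeta t ?a ?p) * M
        - N * (\<rho> * Mt + \<phi> t ?a * M0 + Ph1 t ?a ?p * M1)) / (M * M)"
    unfolding lam_prol_apply_def sum_atMost2 q1 q2 q3 q4 phi1_eq phi2_eq
    by (simp add: lift2_def add_divide_distrib diff_divide_distrib algebra_simps)
  also have "\<dots> = 0" unfolding YN YM by (simp add: algebra_simps)
  finally show "lam_prol_apply (\<lambda>t x. \<rho>) \<phi> lam 2 (zeta_z z zeta) t X = 0" .
  have "pp3 zeta t ?a ?p \<noteq> 0"
  proof -
    have "pd_x 1 (lift3 zeta) t X = pp3 zeta t ?a ?p"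
      unfolding pd_x_def lift3_def pp3_def by simp
    thus ?thesis using zpnz by metis
  qed
  thus "pd_x 2 (zeta_z z zeta) t X \<noteq> 0" unfolding q4 using Mnz by simp
qed


lemma pd_lift2_z: "pd_t (lift2 z) t X = pt2 z t (X 0)" "pd_x 0 (lift2 z) t X = px2 z t (X 0)"
   "pd_x 1 (lift2 z) t X = 0" "pd_x 2 (lift2 z) t X = 0"
proof -
  note pz = pd_expl[where f="lift2 z" and g="\<lambda>t a0 a1 a2. z t a0" and X=X and t=t]
  show "pd_t (lift2 z) t X = pt2 z t (X 0)" by (rule pz; auto simp: lift2_def intro!: atoms DERIV_const)
  show "pd_x 0 (lift2 z) t X = px2 z t (X 0)" by (rule pz; auto simp: lift2_def intro!: atoms DERIV_const)
  show "pd_x 1 (lift2 z) t X = 0" by (rule pz; auto simp: lift2_def intro!: atoms DERIV_const)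
  show "pd_x 2 (lift2 z) t X = 0" by (rule pz; auto simp: lift2_def intro!: atoms DERIV_const)
qed

lemma pd_lift3_zeta: "pd_t (lift3 zeta) t X = pt3 zeta t (X 0) (X 1)" "pd_x 0 (lift3 zeta) t X = px3 zeta t (X 0) (X 1)"
   "pd_x 1 (lift3 zeta) t X = pp3 zeta t (X 0) (X 1)" "pd_x 2 (lift3 zeta) t X = 0"
proof -
  note pz = pd_expl[where f="lift3 zeta" and g="\<lambda>t a0 a1 a2. zeta t a0 a1" and X=X and t=t]
  show "pd_t (lift3 zeta) t X = pt3 zeta t (X 0) (X 1)" by (rule pz; auto simp: lift3_def intro!: atoms DERIV_const)
  show "pd_x 0 (lift3 zeta) t X = px3 zeta t (X 0) (X 1)" by (rule pz; auto simp: lift3_def intro!: atoms DERIV_const)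
  show "pd_x 1 (lift3 zeta) t X = pp3 zeta t (X 0) (X 1)" by (rule pz; auto simp: lift3_def intro!: atoms DERIV_const)
  show "pd_x 2 (lift3 zeta) t X = 0" by (rule pz; auto simp: lift3_def intro!: atoms DERIV_const)
qed

lemma core_main:
  "\<exists>lam. (\<forall>t x p w. lam_tilde c F H t x p w = lam t x p)
      \<and> lambda_symmetry F (\<lambda>t x. \<rho>) \<phi> lam
      \<and> complete_invariants2 (\<lambda>t x. \<rho>) \<phi> lam [lift2 z, lift3 zeta, zeta_z z zeta]
          {(t, X). totD (lift2 z) t X \<noteq> 0}"
proof (intro exI[of _ lam] conjI)
  show "\<forall>t x p w. lam_tilde c F H t x p w = lam t x p" using lam_indep unfolding lamt_def by blast
  show "lambda_symmetry F (\<lambda>t x. \<rho>) \<phi> lam" by (rule lam_sym)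
  show "complete_invariants2 (\<lambda>t x. \<rho>) \<phi> lam [lift2 z, lift3 zeta, zeta_z z zeta]
          {(t, X). totD (lift2 z) t X \<noteq> 0}"
    unfolding complete_invariants2_def
  proof (intro conjI ballI)
    show "length [lift2 z, lift3 zeta, zeta_z z zeta] = 3" by simp
  next
    fix tX assume "tX \<in> {(t, X). totD (lift2 z) t X \<noteq> 0}"
    then obtain t X where tX: "tX = (t, X)" "totD (lift2 z) t X \<noteq> 0" by blast
    show "case tX of (t, X) \<Rightarrow> \<rho> \<noteq> 0 \<or> (\<exists>i\<le>2. phi_lam (\<lambda>t x. \<rho>) \<phi> lam i t X \<noteq> 0)"
      unfolding tX(1) using nv by (auto intro!: exI[of _ 0] simp: lift2_def)
    show "case tX of (t, X) \<Rightarrow> \<forall>I\<in>set [lift2 z, lift3 zeta, zeta_z z zeta].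
            lam_prol_apply (\<lambda>t x. \<rho>) \<phi> lam 2 I t X = 0"
      unfolding tX(1)
    proof (clarsimp)
      have i1: "lam_prol_apply (\<lambda>t x. \<rho>) \<phi> lam 2 (lift2 z) t X = 0"
        unfolding lam_prol_apply_def sum_atMost2 pd_lift2_z using A0[of t "X 0"] by (simp add: lift2_def)
      have i2: "lam_prol_apply (\<lambda>t x. \<rho>) \<phi> lam 2 (lift3 zeta) t X = 0"
        unfolding lam_prol_apply_def sum_atMost2 pd_lift3_zeta phi1_eq using B[of t "X 0" "X 1"] by (simp add: lift2_def)
      show "lam_prol_apply (\<lambda>t x. \<rho>) \<phi> lam 2 (lift2 z) t X = 0 \<and>
            lam_prol_apply (\<lambda>t x. \<rho>) \<phi> lam 2 (lift3 zeta) t X = 0 \<and>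
            lam_prol_apply (\<lambda>t x. \<rho>) \<phi> lam 2 (zeta_z z zeta) t X = 0"
        using i1 i2 I3(1)[OF tX(2)] by blast
    qed
    show "case tX of (t, X) \<Rightarrow> \<forall>cc :: nat \<Rightarrow> real.
        (\<Sum>k<3. cc k * pd_t ([lift2 z, lift3 zeta, zeta_z z zeta] ! k) t X) = 0
      \<and> (\<forall>j\<le>2. (\<Sum>k<3. cc k * pd_x j ([lift2 z, lift3 zeta, zeta_z z zeta] ! k) t X) = 0) \<longrightarrow> (\<forall>k<3. cc k = 0)"
      unfolding tX(1) case_prod_conv
    proof (rule allI, rule impI)
      fix cc :: "nat \<Rightarrow> real"
      assume h: "(\<Sum>k<3. cc k * pd_t ([lift2 z, lift3 zeta, zeta_z z zeta] ! k) t X) = 0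
      \<and> (\<forall>j\<le>2. (\<Sum>k<3. cc k * pd_x j ([lift2 z, lift3 zeta, zeta_z z zeta] ! k) t X) = 0)"
      have h0: "cc 0 * pd_t (lift2 z) t X + cc 1 * pd_t (lift3 zeta) t X + cc 2 * pd_t (zeta_z z zeta) t X = 0"
        using h unfolding sum_lessThan3 by simp
      have hj: "cc 0 * pd_x j (lift2 z) t X + cc 1 * pd_x j (lift3 zeta) t X + cc 2 * pd_x j (zeta_z z zeta) t X = 0"
        if "j \<le> 2" for j using h that unfolding sum_lessThan3 by simp
      have c2: "cc 2 = 0" using hj[of 2] I3(2)[OF tX(2)] pd_lift2_z(4) pd_lift3_zeta(4) by simp
      have fiX: "cc 0 * pd_t (lift2 z) t X + cc 1 * pd_t (lift3 zeta) t X = 0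
        \<and> cc 0 * pd_x 0 (lift2 z) t X + cc 1 * pd_x 0 (lift3 zeta) t X = 0
        \<and> cc 0 * pd_x 1 (lift2 z) t X + cc 1 * pd_x 1 (lift3 zeta) t X = 0 \<longrightarrow> cc 0 = 0 \<and> cc 1 = 0"
        using fi unfolding func_indep_def by blast
      have "cc 0 = 0 \<and> cc 1 = 0"
        using fiX h0 hj[of 0] hj[of 1] c2 by simp
      hence c01: "cc 0 = 0" "cc 1 = 0" by auto
      show "\<forall>k<3. cc k = 0"
      proof (intro allI impI)
        fix k :: nat assume "k < 3"
        hence "k = 0 \<or> k = 1 \<or> k = 2" by auto
        thus "cc k = 0" using c01 c2 by auto
      qed
    qed
  qed
qed

end



lemma gen_vz:
  assumes "smooth2 z" and vz: "\<forall>t X W. prol_apply xi eta psi 0 (lift2w z) t X W = 0"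
  shows "xi t x p w * pt2 z t x + eta t x p w * px2 z t x = 0"
proof -
  have pz: "pdiff2 z" using smooth2_parts assms(1) by blast
  let ?X = "\<lambda>i::nat. if i = 0 then x else p" and ?W = "\<lambda>i::nat. w"
  note w = wpd_expl[where f="lift2w z" and g="\<lambda>t a0 a1 a2 b0 b1. z t a0" and X="?X" and W="?W" and t=t]
  have "wpd_t (lift2w z) t ?X ?W = pt2 z t x"
    by (rule w; auto simp: lift2w_def intro!: pdiff2D[OF pz] DERIV_const)
  moreover have "wpd_x 0 (lift2w z) t ?X ?W = px2 z t x"
    by (rule w; auto simp: lift2w_def intro!: pdiff2D[OF pz] DERIV_const)
  moreover have "wpd_w 0 (lift2w z) t ?X ?W = 0"
    by (rule w; auto simp: lift2w_def intro!: pdiff2D[OF pz] DERIV_const)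
  moreover have "prol_apply xi eta psi 0 (lift2w z) t ?X ?W = 0" using vz by blast
  ultimately show ?thesis unfolding prol_apply_def by (simp add: lift4_def One_nat_def)
qed

lemma grad_z:
  assumes "smooth2 z" "func_indep z zeta"
  shows "pt2 z t x \<noteq> 0 \<or> px2 z t x \<noteq> 0"
proof (rule ccontr)
  assume h: "\<not> (pt2 z t x \<noteq> 0 \<or> px2 z t x \<noteq> 0)"
  have pz: "pdiff2 z" using smooth2_parts assms(1) by blast
  let ?X = "\<lambda>i::nat. x"
  note pe = pd_expl[where f="lift2 z" and g="\<lambda>t a0 a1 a2. z t a0" and X="?X" and t=t]
  have "pd_t (lift2 z) t ?X = pt2 z t x" by (rule pe; auto simp: lift2_def intro!: pdiff2D[OF pz] DERIV_const)
  moreover have "pd_x 0 (lift2 z) t ?X = px2 z t x" by (rule pe; auto simp: lift2_def intro!: pdiff2D[OF pz] DERIV_const)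
  moreover have "pd_x 1 (lift2 z) t ?X = 0" by (rule pe; auto simp: lift2_def intro!: pdiff2D[OF pz] DERIV_const)
  ultimately have "1 * pd_t (lift2 z) t ?X + 0 * pd_t (lift3 zeta) t ?X = 0
    \<and> 1 * pd_x 0 (lift2 z) t ?X + 0 * pd_x 0 (lift3 zeta) t ?X = 0
    \<and> 1 * pd_x 1 (lift2 z) t ?X + 0 * pd_x 1 (lift3 zeta) t ?X = 0" using h by simp
  hence "(1::real) = 0 \<and> (0::real) = 0" using assms(2) unfolding func_indep_def by blast
  thus False by simp
qed

theorem theorem3p1:
  fixes F H :: "real \<Rightarrow> real \<Rightarrow> real \<Rightarrow> real"
    and xi eta psi :: "real \<Rightarrow> real \<Rightarrow> real \<Rightarrow> real \<Rightarrow> real"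
    and z :: "real \<Rightarrow> real \<Rightarrow> real"
    and zeta :: "real \<Rightarrow> real \<Rightarrow> real \<Rightarrow> real"
  assumes "smooth3 F" and "smooth3 H"
    and "nonlocal_symmetry F H xi eta psi z zeta"
  shows "((\<forall>t x p w. xi t x p w \<noteq> 0) \<longrightarrow>
            (\<exists>phi lam.
                (\<forall>t x p w. eta t x p w / xi t x p w = phi t x)
              \<and> (\<forall>t x p w. lam_tilde xi F H t x p w = lam t x p)
              \<and> lambda_symmetry F (\<lambda>t x. 1) phi lam
              \<and> complete_invariants2 (\<lambda>t x. 1) phi lam [lift2 z, lift3 zeta, zeta_z z zeta]
                  {(t, X). totD (lift2 z) t X \<noteq> 0}))
       \<and> (((\<forall>t x p w. xi t x p w = 0) \<and> (\<forall>t x p w. eta t x p w \<noteq> 0)) \<longrightarrow>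
            (\<exists>lam.
                (\<forall>t x p w. lam_tilde eta F H t x p w = lam t x p)
              \<and> lambda_symmetry F (\<lambda>t x. 0) (\<lambda>t x. 1) lam
              \<and> complete_invariants2 (\<lambda>t x. 0) (\<lambda>t x. 1) lam [lift2 z, lift3 zeta, zeta_z z zeta]
                  {(t, X). totD (lift2 z) t X \<noteq> 0}))"


proof -
  have ns: "smooth4 xi" "smooth4 eta" "smooth2 z" "smooth3 zeta" "gen_symmetry F H xi eta psi"
    "func_indep z zeta" "\<forall>t X. pd_x 1 (lift3 zeta) t X \<noteq> 0"
    "\<forall>t X W. prol_apply xi eta psi 0 (lift2w z) t X W = 0"
    "\<forall>(t, X, W) \<in> Delta F H. prol_apply xi eta psi 1 (lift3w zeta) t X W = 0"
    using assms(3) unfolding nonlocal_symmetry_def by blast+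
  have vz: "xi t x p w * pt2 z t x + eta t x p w * px2 z t x = 0" for t x p w
    using gen_vz[OF ns(3) ns(8)] .
  have case1: "\<exists>phi lam.
                (\<forall>t x p w. eta t x p w / xi t x p w = phi t x)
              \<and> (\<forall>t x p w. lam_tilde xi F H t x p w = lam t x p)
              \<and> lambda_symmetry F (\<lambda>t x. 1) phi lam
              \<and> complete_invariants2 (\<lambda>t x. 1) phi lam [lift2 z, lift3 zeta, zeta_z z zeta]
                  {(t, X). totD (lift2 z) t X \<noteq> 0}" if xnz: "\<forall>t x p w. xi t x p w \<noteq> 0"
  proof -
    have zx: "px2 z t x \<noteq> 0" for t x
    proof
      assume "px2 z t x = 0"
      hence "xi t x 0 0 * pt2 z t x = 0" using vz[of t x 0 0] by simp
      hence "pt2 z t x = 0" using xnz by simp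
      thus False using grad_z[OF ns(3) ns(6), of t x] \<open>px2 z t x = 0\<close> by simp
    qed
    define \<phi> where "\<phi> = (\<lambda>t x. - pt2 z t x / px2 z t x)"
    have ph: "eta t x p w / xi t x p w = \<phi> t x" for t x p w
    proof -
      have "eta t x p w * px2 z t x = - xi t x p w * pt2 z t x" using vz[of t x p w] by simp
      thus ?thesis unfolding \<phi>_def using xnz zx by (simp add: field_simps)
    qed
    have pz: "pdiff2 z" "pdiff2 (pt2 z)" "pdiff2 (px2 z)" "pdiff2 (pt2 (pt2 z))" "pdiff2 (px2 (pt2 z))"
      "pdiff2 (pt2 (px2 z))" "pdiff2 (px2 (px2 z))"
      using smooth2_parts ns(3) by meson+
    note za = pdiff2D[OF pz(1)] pdiff2D[OF pz(2)] pdiff2D[OF pz(3)] pdiff2D[OF pz(4)]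
      pdiff2D[OF pz(5)] pdiff2D[OF pz(6)] pdiff2D[OF pz(7)]
    define \<phi>t where "\<phi>t = (\<lambda>t x. - (pt2 (pt2 z) t x * px2 z t x - pt2 z t x * pt2 (px2 z) t x) / (px2 z t x * px2 z t x))"
    define \<phi>x where "\<phi>x = (\<lambda>t x. - (px2 (pt2 z) t x * px2 z t x - pt2 z t x * px2 (px2 z) t x) / (px2 z t x * px2 z t x))"
    define \<phi>tt where "\<phi>tt = (\<lambda>t x. deriv (\<lambda>s. \<phi>t s x) t)"
    define \<phi>tx where "\<phi>tx = (\<lambda>t x. deriv (\<lambda>s. \<phi>t t s) x)"
    define \<phi>xt where "\<phi>xt = (\<lambda>t x. deriv (\<lambda>s. \<phi>x s x) t)"
    define \<phi>xx where "\<phi>xx = (\<lambda>t x. deriv (\<lambda>s. \<phi>x t s) x)"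
    have "core F H xi xi eta psi 1 \<phi> \<phi>t \<phi>x \<phi>tt \<phi>tx \<phi>xt \<phi>xx z zeta"
    proof (unfold_locales)
      show "smooth3 F" "smooth3 H" "smooth4 xi" "smooth2 z" "smooth3 zeta" using assms ns by blast+
      show "\<And>t x p w. xi t x p w \<noteq> 0" using xnz by blast
      show "xi = (\<lambda>t x p w. 1 * xi t x p w)" by simp
      show "eta = (\<lambda>t x p w. \<phi> t x * xi t x p w)"
        using ph xnz by (intro ext) (metis nonzero_eq_divide_eq)
      show "\<And>t x. ((\<lambda>s. \<phi> s x) has_real_derivative \<phi>t t x) (at t)"
        unfolding \<phi>_def \<phi>t_def using zx by (auto intro!: derivative_eq_intros za simp: field_simps)
      show "\<And>t x. ((\<lambda>s. \<phi> t s) has_real_derivative \<phi>x t x) (at x)"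
        unfolding \<phi>_def \<phi>x_def using zx by (auto intro!: derivative_eq_intros za simp: field_simps)
      show "\<And>t x. ((\<lambda>s. \<phi>t s x) has_real_derivative \<phi>tt t x) (at t)"
        unfolding \<phi>tt_def DERIV_deriv_iff_real_differentiable unfolding \<phi>t_def
        using zx by (auto intro!: derivative_intros za[THEN derivD])
      show "\<And>t x. ((\<lambda>s. \<phi>t t s) has_real_derivative \<phi>tx t x) (at x)"
        unfolding \<phi>tx_def DERIV_deriv_iff_real_differentiable unfolding \<phi>t_def
        using zx by (auto intro!: derivative_intros za[THEN derivD])
      show "\<And>t x. ((\<lambda>s. \<phi>x s x) has_real_derivative \<phi>xt t x) (at t)"
        unfolding \<phi>xt_def DERIV_deriv_iff_real_differentiable unfolding \<phi>x_def
        using zx by (auto intro!: derivative_intros za[THEN derivD])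
      show "\<And>t x. ((\<lambda>s. \<phi>x t s) has_real_derivative \<phi>xx t x) (at x)"
        unfolding \<phi>xx_def DERIV_deriv_iff_real_differentiable unfolding \<phi>x_def
        using zx by (auto intro!: derivative_intros za[THEN derivD])
      show "gen_symmetry F H xi eta psi" "func_indep z zeta" "\<forall>t X. pd_x 1 (lift3 zeta) t X \<noteq> 0"
        "\<forall>t X W. prol_apply xi eta psi 0 (lift2w z) t X W = 0"
        "\<forall>(t, X, W) \<in> Delta F H. prol_apply xi eta psi 1 (lift3w zeta) t X W = 0"
        using ns by blast+
      show "(1::real) \<noteq> 0 \<or> (\<forall>t x. \<phi> t x \<noteq> 0)" by simp
    qed
    from core.core_main[OF this] obtain lam where
      "(\<forall>t x p w. lam_tilde xi F H t x p w = lam t x p)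
      \<and> lambda_symmetry F (\<lambda>t x. 1) \<phi> lam
      \<and> complete_invariants2 (\<lambda>t x. 1) \<phi> lam [lift2 z, lift3 zeta, zeta_z z zeta]
          {(t, X). totD (lift2 z) t X \<noteq> 0}" by blast
    thus ?thesis using ph by blast
  qed
  have case2: "\<exists>lam.
                (\<forall>t x p w. lam_tilde eta F H t x p w = lam t x p)
              \<and> lambda_symmetry F (\<lambda>t x. 0) (\<lambda>t x. 1) lam
              \<and> complete_invariants2 (\<lambda>t x. 0) (\<lambda>t x. 1) lam [lift2 z, lift3 zeta, zeta_z z zeta]
                  {(t, X). totD (lift2 z) t X \<noteq> 0}"
    if x0: "\<forall>t x p w. xi t x p w = 0" and enz: "\<forall>t x p w. eta t x p w \<noteq> 0"
  proof -
    have "core F H eta xi eta psi 0 (\<lambda>t x. 1) (\<lambda>t x. 0) (\<lambda>t x. 0) (\<lambda>t x. 0) (\<lambda>t x. 0) (\<lambda>t x. 0) (\<lambda>t x. 0) z zeta"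
    proof (unfold_locales)
      show "smooth3 F" "smooth3 H" "smooth4 eta" "smooth2 z" "smooth3 zeta" using assms ns by blast+
      show "\<And>t x p w. eta t x p w \<noteq> 0" using enz by blast
      show "xi = (\<lambda>t x p w. 0 * eta t x p w)" using x0 by (intro ext) simp
      show "eta = (\<lambda>t x p w. 1 * eta t x p w)" by simp
      show "gen_symmetry F H xi eta psi" "func_indep z zeta" "\<forall>t X. pd_x 1 (lift3 zeta) t X \<noteq> 0"
        "\<forall>t X W. prol_apply xi eta psi 0 (lift2w z) t X W = 0"
        "\<forall>(t, X, W) \<in> Delta F H. prol_apply xi eta psi 1 (lift3w zeta) t X W = 0"
        using ns by blast+
      show "(0::real) \<noteq> 0 \<or> (\<forall>t x. (1::real) \<noteq> 0)" by simp
    qed (auto intro: DERIV_const)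
    from core.core_main[OF this] show ?thesis by blast
  qed
  show ?thesis using case1 case2 by blast
qed


end
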